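(* For $n,k\ge0$ let $h(n,k)$ be the number of $k$-flats of $I(\mathfrak{gl}_n,V\oplus\bigwedge^2)$. Then, as formal power series, \[ H(s,t)=\sum_{n,k\ge0}h(n,k)s^nt^k=\frac{(1-s)(1-st+s^2t)}{1-2s+s^2-2st+3s^2t-2s^3t+s^2t^2-2s^3t^2+s^4t^2}. \]
   Context: Identify the diagonal Cartan subalgebra of $\mathfrak{gl}_n$ with $\mathbb{R}^n$ with coordinates $x_1,\dots,x_n$. Let $W=\{x_1\ge\cdots\ge x_n\}$ (closed Weyl chamber). For $1\le i\le j\le n$ let $\lambda_{i,j}^\perp$ be the hyperplane $x_i+x_j=0$ (for $i=j$: $x_i=0$); these are the kernels of the weights of $V\oplus\bigwedge^2V$ and $I(\mathfrak{gl}_n,V\oplus\bigwedge^2)$ is the arrangement of these hyperplanes restricted to $W$. A flat is a set of the form $W\cap\bigcap_{(i,j)\in T}\lambda_{i,j}^\perp$ for some (possibly empty) set $T$ of pairs $i\le j$ (the empty $T$ gives $W$); a $k$-flat is a flat whose linear span has dimension $k$. Distinct flats are counted as distinct subsets of $W$. *)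

theory Defs
  imports "HOL-Library.Function_Algebras" "HOL-Computational_Algebra.Formal_Power_Series"
begin

text \<open>Points of R^n are modelled as functions x :: nat => real with x i = 0 for i >= n;
  coordinate x_{i+1} of the paper is x i here (0-based).\<close>

definition Rn :: "nat \<Rightarrow> (nat \<Rightarrow> real) set" where
  "Rn n = {x. \<forall>i\<ge>n. x i = 0}"

definition fscale :: "real \<Rightarrow> (nat \<Rightarrow> real) \<Rightarrow> (nat \<Rightarrow> real)" where
  "fscale c x = (\<lambda>i. c * x i)"

definition weyl :: "nat \<Rightarrow> (nat \<Rightarrow> real) set" where
  "weyl n = {x \<in> Rn n. \<forall>i j. i \<le> j \<and> j < n \<longrightarrow> x j \<le> x i}"

text \<open>Index pairs (i,j), i <= j, of the weights of V + wedge^2 V.\<close>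
definition wpairs :: "nat \<Rightarrow> (nat \<times> nat) set" where
  "wpairs n = {(i, j). i \<le> j \<and> j < n}"

definition hyp :: "nat \<Rightarrow> nat \<times> nat \<Rightarrow> (nat \<Rightarrow> real) set" where
  "hyp n p = {x \<in> Rn n. (if fst p = snd p then x (fst p) = 0 else x (fst p) + x (snd p) = 0)}"

definition flat_of :: "nat \<Rightarrow> (nat \<times> nat) set \<Rightarrow> (nat \<Rightarrow> real) set" where
  "flat_of n T = weyl n \<inter> (\<Inter>p\<in>T. hyp n p)"

definition flats :: "nat \<Rightarrow> (nat \<Rightarrow> real) set set" where
  "flats n = {flat_of n T | T. T \<subseteq> wpairs n}"

definition h :: "nat \<Rightarrow> nat \<Rightarrow> nat" where
  "h n k = card {F \<in> flats n. vector_space.dim fscale F = k}"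

text \<open>Bivariate formal power series over Q: an element of (rat fps) fps, outer variable s, inner t.\<close>
definition H :: "rat fps fps" where
  "H = Abs_fps (\<lambda>n. Abs_fps (\<lambda>k. of_nat (h n k)))"

definition S :: "rat fps fps" where "S = fps_X"
definition T :: "rat fps fps" where "T = fps_const fps_X"

end

theory Submission
  imports Defs
begin

definition lf :: "nat \<times> nat \<Rightarrow> (nat \<Rightarrow> real) \<Rightarrow> real" where
  "lf p x = (if fst p = snd p then x (fst p) else x (fst p) + x (snd p))"

definition Tx :: "nat \<Rightarrow> (nat \<Rightarrow> real) \<Rightarrow> (nat \<times> nat) set" where
  "Tx n x = {p \<in> wpairs n. x \<in> hyp n p}"

definition Real :: "nat \<Rightarrow> (nat \<times> nat) set set" where
  "Real n = Tx n ` weyl n"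

definition dimT :: "nat \<Rightarrow> (nat \<times> nat) set \<Rightarrow> nat" where
  "dimT n Q = vector_space.dim fscale (flat_of n Q)"

lemma sum_fun_apply: "(sum f A) i = sum (\<lambda>a. f a i) A" for f :: "'a \<Rightarrow> nat \<Rightarrow> real"
  by (induction A rule: infinite_finite_induct) auto

lemma hyp_lf: "x \<in> hyp n p \<longleftrightarrow> x \<in> Rn n \<and> lf p x = 0"
  by (simp add: hyp_def lf_def)

lemma lf_lin: "lf p (x + fscale c y) = lf p x + c * lf p y"
  by (simp add: lf_def fscale_def algebra_simps)

lemma perturb:
  fixes F :: "(nat \<Rightarrow> real) set" and L :: "'p \<Rightarrow> (nat \<Rightarrow> real) \<Rightarrow> real"
  assumes fin: "finite P" and F0: "x0 \<in> F"
    and cl: "\<And>x y c. x \<in> F \<Longrightarrow> y \<in> F \<Longrightarrow> c > 0 \<Longrightarrow> x + fscale c y \<in> F"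
    and lin: "\<And>p x y c. L p (x + fscale c y) = L p x + c * L p y"
  shows "\<exists>x\<in>F. \<forall>p\<in>P. L p x = 0 \<longrightarrow> (\<forall>y\<in>F. L p y = 0)"
  using fin
proof (induction P rule: finite_induct)
  case empty
  then show ?case using F0 by blast
next
  case (insert p P)
  then obtain x where x: "x \<in> F" and xP: "\<forall>q\<in>P. L q x = 0 \<longrightarrow> (\<forall>y\<in>F. L q y = 0)" by blast
  show ?case
  proof (cases "(\<forall>y\<in>F. L p y = 0) \<or> L p x \<noteq> 0")
    case True
    then show ?thesis using x xP by blast
  next
    case False
    then obtain y where y: "y \<in> F" "L p y \<noteq> 0" and px: "L p x = 0" by blast
    define B where "B = (\<lambda>q. - L q x / L q y) ` P"
    define c where "c = Max (insert 0 B) + 1"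
    have finB: "finite B" using insert.hyps unfolding B_def by simp
    have cB: "c \<notin> B"
    proof
      assume "c \<in> B"
      then have "c \<le> Max (insert 0 B)" using finB by simp
      then show False unfolding c_def by simp
    qed
    have c0: "c > 0"
    proof -
      have "0 \<le> Max (insert 0 B)" using finB by simp
      then show ?thesis unfolding c_def by simp
    qed
    define x' where "x' = x + fscale c y"
    have x'F: "x' \<in> F" unfolding x'_def using cl[OF x y(1) c0] .
    have "\<forall>q\<in>insert p P. L q x' = 0 \<longrightarrow> (\<forall>y\<in>F. L q y = 0)"
    proof
      fix q assume q: "q \<in> insert p P"
      show "L q x' = 0 \<longrightarrow> (\<forall>y\<in>F. L q y = 0)"
      proof
        assume z: "L q x' = 0"
        then have z': "L q x + c * L q y = 0" unfolding x'_def lin .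
        show "\<forall>y\<in>F. L q y = 0"
        proof (cases "q = p")
          case True
          then have "c * L p y = 0" using z' px by simp
          then show ?thesis using c0 y(2) by simp
        next
          case False
          then have qP: "q \<in> P" using q by simp
          show ?thesis
          proof (cases "L q y = 0")
            case True
            then show ?thesis using z' xP qP by simp
          next
            case False
            then have "c = - L q x / L q y" using z' by (simp add: field_simps)
            then have "c \<in> B" unfolding B_def using qP by blast
            then show ?thesis using cB by simp
          qed
        qed
      qed
    qed
    then show ?thesis using x'F by blast
  qed
qed

lemma flat_cl:
  assumes "x \<in> flat_of n Q" "y \<in> flat_of n Q" "c > 0"
  shows "x + fscale c y \<in> flat_of n Q"
proof -
  have w: "x \<in> weyl n" "y \<in> weyl n" using assms by (auto simp: flat_of_def)
  have "x + fscale c y \<in> weyl n"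
    using w assms(3) by (auto simp: weyl_def Rn_def fscale_def intro!: add_mono mult_left_mono)
  moreover have "x + fscale c y \<in> hyp n p" if "p \<in> Q" for p
  proof -
    have "x \<in> hyp n p" "y \<in> hyp n p" using assms that by (auto simp: flat_of_def)
    then show ?thesis using \<open>x + fscale c y \<in> weyl n\<close> by (simp add: hyp_lf lf_lin weyl_def)
  qed
  ultimately show ?thesis by (simp add: flat_of_def)
qed

lemma zero_flat: "(0 :: nat \<Rightarrow> real) \<in> flat_of n Q"
  by (simp add: flat_of_def weyl_def Rn_def hyp_def)

lemma finite_wpairs: "finite (wpairs n)"
proof -
  have "wpairs n \<subseteq> {..<n} \<times> {..<n}" by (auto simp: wpairs_def)
  then show ?thesis by (rule finite_subset) simp
qed

lemma flat_Tx_self: "x \<in> weyl n \<Longrightarrow> x \<in> flat_of n (Tx n x)"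
  by (simp add: flat_of_def Tx_def)

lemma flats_Real: "flats n = flat_of n ` Real n"
proof
  show "flats n \<subseteq> flat_of n ` Real n"
  proof
    fix F assume "F \<in> flats n"
    then obtain Q where Q: "Q \<subseteq> wpairs n" and F: "F = flat_of n Q" by (auto simp: flats_def)
    obtain x where x: "x \<in> F" and gx: "\<forall>p\<in>wpairs n. lf p x = 0 \<longrightarrow> (\<forall>y\<in>F. lf p y = 0)"
      using perturb[of "wpairs n" 0 F lf] finite_wpairs zero_flat flat_cl lf_lin F by blast
    have xw: "x \<in> weyl n" using x F by (simp add: flat_of_def)
    have "F = flat_of n (Tx n x)"
    proof
      show "F \<subseteq> flat_of n (Tx n x)"
      proof
        fix y assume y: "y \<in> F"
        then have yw: "y \<in> weyl n" using F by (simp add: flat_of_def)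
        have "y \<in> hyp n p" if "p \<in> Tx n x" for p
          using that gx y yw by (auto simp: Tx_def hyp_lf weyl_def)
        then show "y \<in> flat_of n (Tx n x)" using yw by (simp add: flat_of_def)
      qed
      show "flat_of n (Tx n x) \<subseteq> F"
      proof -
        have "Q \<subseteq> Tx n x" using Q x F by (auto simp: Tx_def flat_of_def)
        then show ?thesis using F by (auto simp: flat_of_def)
      qed
    qed
    then show "F \<in> flat_of n ` Real n" using xw by (auto simp: Real_def)
  qed
  show "flat_of n ` Real n \<subseteq> flats n"
    by (auto simp: flats_def Real_def Tx_def)
qed

lemma inj_flat: "inj_on (flat_of n) (Real n)"
proof
  fix Q1 Q2 assume "Q1 \<in> Real n" "Q2 \<in> Real n" and eq: "flat_of n Q1 = flat_of n Q2"
  then obtain x1 x2 where x: "x1 \<in> weyl n" "x2 \<in> weyl n" "Q1 = Tx n x1" "Q2 = Tx n x2"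
    by (auto simp: Real_def)
  have "x1 \<in> flat_of n Q2" using flat_Tx_self[OF x(1)] eq x(3) by simp
  then have a: "Q2 \<subseteq> Q1" using x by (auto simp: flat_of_def Tx_def)
  have "x2 \<in> flat_of n Q1" using flat_Tx_self[OF x(2)] eq x(4) by simp
  then have b: "Q1 \<subseteq> Q2" using x by (auto simp: flat_of_def Tx_def)
  show "Q1 = Q2" using a b by simp
qed

lemma h_Real: "h n k = card {Q \<in> Real n. dimT n Q = k}"
proof -
  have "{F \<in> flats n. vector_space.dim fscale F = k} = flat_of n ` {Q \<in> Real n. dimT n Q = k}"
    unfolding flats_Real dimT_def by auto
  moreover have "inj_on (flat_of n) {Q \<in> Real n. dimT n Q = k}"
    using inj_flat by (rule inj_on_subset) auto
  ultimately show ?thesis unfolding h_def by (simp add: card_image)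
qed

interpretation fs: vector_space fscale
  by unfold_locales (auto simp: fscale_def fun_eq_iff algebra_simps)

lemma fscale_apply[simp]: "fscale c x i = c * x i"
  by (simp add: fscale_def)

definition good :: "nat \<Rightarrow> (nat \<Rightarrow> real) \<Rightarrow> bool" where
  "good n x \<longleftrightarrow> (\<forall>i<n. \<forall>j<n. x i = x j \<longrightarrow> i = j \<or> x i = 0 \<or> (\<exists>l<n. x l = - x i))"

definition Vx :: "nat \<Rightarrow> (nat \<Rightarrow> real) \<Rightarrow> real set" where
  "Vx n x = {\<bar>x i\<bar> | i. i < n \<and> x i \<noteq> 0}"

lemma pair_lemma:
  assumes x: "x \<in> weyl n" and y: "y \<in> flat_of n (Tx n x)" and ij: "i < n" "j < n" "x i + x j = 0"
  shows "y i + y j = 0"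
proof -
  let ?p = "(min i j, max i j)"
  have "?p \<in> Tx n x" using x ij
    by (auto simp: Tx_def wpairs_def hyp_def weyl_def min_def max_def add.commute)
  then have "y \<in> hyp n ?p" using y by (auto simp: flat_of_def)
  then show ?thesis by (auto simp: hyp_def min_def max_def add.commute split: if_splits)
qed

definition Esp :: "nat \<Rightarrow> (nat \<Rightarrow> real) \<Rightarrow> (nat \<Rightarrow> real) set" where
  "Esp n x = {y \<in> Rn n. \<forall>i<n. \<forall>j<n. (x i = x j \<longrightarrow> y i = y j) \<and> (x i = - x j \<longrightarrow> y i = - y j)}"

lemma ExD:
  assumes "y \<in> Esp n x"
  shows "\<forall>i<n. \<forall>j<n. (x i = x j \<longrightarrow> y i = y j) \<and> (x i = - x j \<longrightarrow> y i = - y j)"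
  using assms unfolding Esp_def mem_Collect_eq by (rule conjunct2)

lemma ExD1: assumes "y \<in> Esp n x" "i < n" "j < n" "x i = x j" shows "y i = y j"
  using ExD[OF assms(1), rule_format, OF assms(2,3)] assms(4) by (rule conjunct1[THEN mp])
lemma ExD2: assumes "y \<in> Esp n x" "i < n" "j < n" "x i = - x j" shows "y i = - y j"
  using ExD[OF assms(1), rule_format, OF assms(2,3)] assms(4) by (rule conjunct2[THEN mp])
lemma ExD3: "y \<in> Esp n x \<Longrightarrow> y \<in> Rn n"
  unfolding Esp_def mem_Collect_eq by (rule conjunct1)
lemma ExI: "y \<in> Rn n \<Longrightarrow> (\<And>i j. i < n \<Longrightarrow> j < n \<Longrightarrow> x i = x j \<Longrightarrow> y i = y j)
  \<Longrightarrow> (\<And>i j. i < n \<Longrightarrow> j < n \<Longrightarrow> x i = - x j \<Longrightarrow> y i = - y j) \<Longrightarrow> y \<in> Esp n x"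
  unfolding Esp_def by (intro CollectI conjI allI impI)

lemma Ex_subspace: "fs.subspace (Esp n x)"
  unfolding fs.subspace_def
proof (intro conjI ballI allI)
  show "0 \<in> Esp n x" by (rule ExI) (simp_all add: Rn_def)
next
  fix y z assume a: "y \<in> Esp n x" "z \<in> Esp n x"
  show "y + z \<in> Esp n x"
  proof (rule ExI)
    show "y + z \<in> Rn n" using ExD3[OF a(1)] ExD3[OF a(2)] by (simp add: Rn_def)
  next
    fix i j assume ij: "i < n" "j < n" "x i = x j"
    show "(y + z) i = (y + z) j"
      using ExD1[OF a(1) ij] ExD1[OF a(2) ij] by simp
  next
    fix i j assume ij: "i < n" "j < n" "x i = - x j"
    show "(y + z) i = - (y + z) j"
      using ExD2[OF a(1) ij] ExD2[OF a(2) ij] by simp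
  qed
next
  fix c y assume a: "y \<in> Esp n x"
  show "fscale c y \<in> Esp n x"
  proof (rule ExI)
    show "fscale c y \<in> Rn n" using ExD3[OF a] by (simp add: Rn_def)
  next
    fix i j assume ij: "i < n" "j < n" "x i = x j"
    show "fscale c y i = fscale c y j"
      using ExD1[OF a ij] by simp
  next
    fix i j assume ij: "i < n" "j < n" "x i = - x j"
    show "fscale c y i = - fscale c y j"
      using ExD2[OF a ij] by simp
  qed
qed

lemma flat_sub_Ex:
  assumes x: "x \<in> weyl n" and g: "good n x"
  shows "flat_of n (Tx n x) \<subseteq> Esp n x"
proof
  fix y assume y: "y \<in> flat_of n (Tx n x)"
  have yR: "y \<in> Rn n" using y by (auto simp: flat_of_def weyl_def)
  have A: "y i = y j" if ij: "i < n" "j < n" "x i = x j" for i j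
  proof -
    consider "i = j" | "x i = 0" | l where "l < n" "x l = - x i"
      using g ij unfolding good_def by blast
    then show ?thesis
    proof cases
      case 1 then show ?thesis by simp
    next
      case 2
      have "y i + y i = 0" using pair_lemma[OF x y ij(1) ij(1)] 2 by simp
      moreover have "y j + y j = 0" using pair_lemma[OF x y ij(2) ij(2)] 2 ij(3) by simp
      ultimately show ?thesis by simp
    next
      case 3
      have "y i + y l = 0" using pair_lemma[OF x y ij(1) 3(1)] 3(2) by simp
      moreover have "y j + y l = 0" using pair_lemma[OF x y ij(2) 3(1)] 3(2) ij(3) by simp
      ultimately show ?thesis by simp
    qed
  qed
  have B: "y i = - y j" if ij: "i < n" "j < n" "x i = - x j" for i j
    using pair_lemma[OF x y ij(1) ij(2)] ij(3) by simp
  show "y \<in> Esp n x" using yR A B by (rule ExI)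
qed

lemma Ex_sub_span:
  assumes x: "x \<in> weyl n"
  shows "Esp n x \<subseteq> fs.span (flat_of n (Tx n x))"
proof
  fix y assume y: "y \<in> Esp n x"
  define P where "P = {(i, j). i < n \<and> j < n \<and> x j < x i}"
  define M where "M = Max (insert 0 ((\<lambda>(i, j). (y j - y i) / (x i - x j)) ` P))"
  have finP: "finite P" unfolding P_def by (rule finite_subset[of _ "{..<n} \<times> {..<n}"]) auto
  have M0: "M \<ge> 0" unfolding M_def using finP by simp
  have MP: "M * (x i - x j) \<ge> y j - y i" if "(i, j) \<in> P" for i j
  proof -
    have "(y j - y i) / (x i - x j) \<le> M" unfolding M_def using finP that by (intro Max_ge) auto
    moreover have "x i - x j > 0" using that by (simp add: P_def)
    ultimately show ?thesis by (simp add: divide_le_eq)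
  qed
  note yE1 = ExD1[OF y] and yE2 = ExD2[OF y] and yE3 = ExD3[OF y]
  have xR: "x \<in> Rn n" and xo: "\<And>i j. i \<le> j \<Longrightarrow> j < n \<Longrightarrow> x j \<le> x i" using x by (auto simp: weyl_def)
  have inF: "fscale M x + fscale c y \<in> flat_of n (Tx n x)" if c: "c \<in> {0, 1}" for c
  proof -
    let ?z = "fscale M x + fscale c y"
    have zR: "?z \<in> Rn n" using xR yE3 by (simp add: Rn_def)
    have zo: "?z j \<le> ?z i" if "i \<le> j" "j < n" for i j
    proof (cases "x j < x i")
      case True
      then have "(i, j) \<in> P" using that by (simp add: P_def)
      then have "M * (x i - x j) \<ge> y j - y i" by (rule MP)
      then show ?thesis using c M0 mult_left_mono[of "x j" "x i" M] True by (auto simp: algebra_simps)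
    next
      case False
      then have "x j = x i" using xo[OF that] by simp
      then have "y j = y i" using yE1[of j i] that by simp
      then show ?thesis using \<open>x j = x i\<close> by simp
    qed
    have zh: "?z \<in> hyp n p" if pT: "p \<in> Tx n x" for p
    proof -
      obtain i j where p: "p = (i, j)" "i \<le> j" "j < n" and xh: "x \<in> hyp n p"
        using pT by (auto simp: Tx_def wpairs_def)
      show ?thesis
      proof (cases "i = j")
        case True
        then have "x i = 0" using xh p by (simp add: hyp_def)
        then have "y i = 0" using yE2[of i i] p by simp
        then show ?thesis using zR p True \<open>x i = 0\<close> by (simp add: hyp_def)
      next
        case False
        then have "x i + x j = 0" using xh p by (simp add: hyp_def)
        then have "y i + y j = 0" using yE2[of i j] p by simp
        moreover have "M * x i + M * x j = 0" using \<open>x i + x j = 0\<close> by (metis distrib_left mult_zero_right)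
        moreover have "c * y i + c * y j = 0" using \<open>y i + y j = 0\<close> by (metis distrib_left mult_zero_right)
        ultimately show ?thesis using zR p False by (simp add: hyp_def)
      qed
    qed
    show ?thesis using zR zo zh by (simp add: flat_of_def weyl_def)
  qed
  have "y = (fscale M x + fscale 1 y) - (fscale M x + fscale 0 y)"
    by (simp add: fun_eq_iff fscale_def)
  moreover have "fscale M x + fscale 1 y \<in> fs.span (flat_of n (Tx n x))"
    using inF[of 1] by (intro fs.span_base) simp
  moreover have "fscale M x + fscale 0 y \<in> fs.span (flat_of n (Tx n x))"
    using inF[of 0] by (intro fs.span_base) simp
  ultimately show "y \<in> fs.span (flat_of n (Tx n x))"
    using fs.span_diff by metis
qed

lemma span_flat:
  assumes x: "x \<in> weyl n" and g: "good n x"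
  shows "fs.span (flat_of n (Tx n x)) = Esp n x"
  using Ex_sub_span[OF x] fs.span_minimal[OF flat_sub_Ex[OF x g] Ex_subspace] by blast

definition bvec :: "nat \<Rightarrow> (nat \<Rightarrow> real) \<Rightarrow> real \<Rightarrow> nat \<Rightarrow> real" where
  "bvec n x v = (\<lambda>i. if i < n \<and> x i = v then 1 else if i < n \<and> x i = - v then -1 else 0)"

definition rep :: "nat \<Rightarrow> (nat \<Rightarrow> real) \<Rightarrow> real \<Rightarrow> nat" where
  "rep n x v = (SOME i. i < n \<and> x i \<noteq> 0 \<and> \<bar>x i\<bar> = v)"

lemma Vx_fin: "finite (Vx n x)"
proof -
  have "Vx n x \<subseteq> (\<lambda>i. \<bar>x i\<bar>) ` {..<n}" by (auto simp: Vx_def)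
  then show ?thesis by (rule finite_subset) simp
qed

lemma Vx_pos: "v \<in> Vx n x \<Longrightarrow> v > 0"
  by (auto simp: Vx_def)

lemma rep: assumes "v \<in> Vx n x"
  shows "rep n x v < n" "x (rep n x v) \<noteq> 0" "\<bar>x (rep n x v)\<bar> = v"
proof -
  have "\<exists>i. i < n \<and> x i \<noteq> 0 \<and> \<bar>x i\<bar> = v" using assms by (auto simp: Vx_def)
  then have "rep n x v < n \<and> x (rep n x v) \<noteq> 0 \<and> \<bar>x (rep n x v)\<bar> = v"
    unfolding rep_def by (rule someI_ex)
  then show "rep n x v < n" "x (rep n x v) \<noteq> 0" "\<bar>x (rep n x v)\<bar> = v" by auto
qed

lemma absx_in: "i < n \<Longrightarrow> x i \<noteq> 0 \<Longrightarrow> \<bar>x i\<bar> \<in> Vx n x"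
  by (auto simp: Vx_def)

lemma bvec_at: "i < n \<Longrightarrow> x i \<noteq> 0 \<Longrightarrow> bvec n x \<bar>x i\<bar> i = sgn (x i)"
  by (auto simp: bvec_def sgn_if abs_if)

lemma bvec_zero: "v \<in> Vx n x \<Longrightarrow> \<not> (i < n \<and> x i \<noteq> 0 \<and> v = \<bar>x i\<bar>) \<Longrightarrow> bvec n x v i = 0"
  using Vx_pos[of v n x] by (auto simp: bvec_def abs_if)

lemma sum_bvec:
  assumes "i < n" "x i \<noteq> 0"
  shows "(\<Sum>v\<in>Vx n x. f v * bvec n x v i) = f \<bar>x i\<bar> * sgn (x i)"
proof -
  have m: "\<bar>x i\<bar> \<in> Vx n x" using absx_in assms .
  have "(\<Sum>v\<in>Vx n x. f v * bvec n x v i) = f \<bar>x i\<bar> * bvec n x \<bar>x i\<bar> i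
      + (\<Sum>v\<in>Vx n x - {\<bar>x i\<bar>}. f v * bvec n x v i)"
    using Vx_fin m by (simp add: sum.remove)
  also have "(\<Sum>v\<in>Vx n x - {\<bar>x i\<bar>}. f v * bvec n x v i) = 0"
    by (rule sum.neutral) (auto simp: bvec_zero)
  finally show ?thesis using bvec_at[of i n x, OF assms] by simp
qed

lemma sum_bvec0:
  assumes "\<not> (i < n \<and> x i \<noteq> 0)"
  shows "(\<Sum>v\<in>Vx n x. f v * bvec n x v i) = 0"
  by (rule sum.neutral) (use assms in \<open>auto simp: bvec_zero\<close>)

lemma bvec_inj: "inj_on (bvec n x) (Vx n x)"
proof
  fix v w assume v: "v \<in> Vx n x" and w: "w \<in> Vx n x" and eq: "bvec n x v = bvec n x w"
  let ?i = "rep n x v"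
  have "bvec n x v ?i \<noteq> 0" using rep[OF v] bvec_at[of ?i n x] by (auto simp: sgn_if)
  then have "bvec n x w ?i \<noteq> 0" using eq by simp
  then have "w = \<bar>x ?i\<bar>" using bvec_zero[OF w] by blast
  then show "v = w" using rep(3)[OF v] by simp
qed

lemma bvec_Esp: "v \<in> Vx n x \<Longrightarrow> bvec n x v \<in> Esp n x"
  using Vx_pos[of v n x]
  by (intro ExI) (auto simp: bvec_def Rn_def)

lemma sum_apply_scale: "(\<Sum>w\<in>bvec n x ` Vx n x. fscale (c w) w) i = (\<Sum>v\<in>Vx n x. c (bvec n x v) * bvec n x v i)"
  by (simp add: sum_fun_apply sum.reindex[OF bvec_inj])

lemma bvec_indep: "fs.independent (bvec n x ` Vx n x)"
proof (rule fs.independent_if_scalars_zero)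
  show "finite (bvec n x ` Vx n x)" using Vx_fin by simp
next
  fix c w assume s: "(\<Sum>w\<in>bvec n x ` Vx n x. fscale (c w) w) = 0" and w: "w \<in> bvec n x ` Vx n x"
  then obtain v where v: "v \<in> Vx n x" "w = bvec n x v" by blast
  let ?i = "rep n x v"
  have "(\<Sum>w\<in>bvec n x ` Vx n x. fscale (c w) w) ?i = 0" using s by simp
  then have "c (bvec n x \<bar>x ?i\<bar>) * sgn (x ?i) = 0"
    using sum_bvec[of ?i n x, OF rep(1,2)[OF v(1)], of "\<lambda>v. c (bvec n x v)"] by (simp add: sum_apply_scale)
  then show "c w = 0" using rep[OF v(1)] v by (simp add: sgn_if split: if_splits)
qed

lemma Esp_span: "Esp n x \<subseteq> fs.span (bvec n x ` Vx n x)"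
proof
  fix y assume y: "y \<in> Esp n x"
  define cv where "cv v = y (rep n x v) * sgn (x (rep n x v))" for v
  have "y = (\<Sum>w\<in>bvec n x ` Vx n x. fscale (cv (THE v. v \<in> Vx n x \<and> bvec n x v = w)) w)"
  proof
    fix i
    have th: "(THE v'. v' \<in> Vx n x \<and> bvec n x v' = bvec n x v) = v" if "v \<in> Vx n x" for v
      using that bvec_inj[of n x] by (auto simp: inj_on_def)
    have "(\<Sum>w\<in>bvec n x ` Vx n x. fscale (cv (THE v. v \<in> Vx n x \<and> bvec n x v = w)) w) i
        = (\<Sum>v\<in>Vx n x. cv v * bvec n x v i)"
      unfolding sum_apply_scale by (rule sum.cong) (simp_all add: th)
    also have "\<dots> = y i"
    proof (cases "i < n \<and> x i \<noteq> 0")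
      case True
      then have si: "(\<Sum>v\<in>Vx n x. cv v * bvec n x v i) = cv \<bar>x i\<bar> * sgn (x i)"
        by (intro sum_bvec) auto
      have m: "\<bar>x i\<bar> \<in> Vx n x" using True absx_in by blast
      let ?r = "rep n x \<bar>x i\<bar>"
      have r: "?r < n" "x ?r \<noteq> 0" "\<bar>x ?r\<bar> = \<bar>x i\<bar>" using rep[OF m] by auto
      have "x ?r = x i \<or> x ?r = - x i" using r(3) by (auto simp: abs_if split: if_splits)
      then show ?thesis
      proof
        assume e: "x ?r = x i"
        then have "y ?r = y i" using ExD1[OF y r(1) _ e] True by simp
        then show ?thesis using si e True by (simp add: cv_def sgn_if)
      next
        assume e: "x ?r = - x i"
        then have "y ?r = - y i" using ExD2[OF y r(1) _ e] True by simp
        then show ?thesis using si e True by (simp add: cv_def sgn_if)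
      qed
    next
      case False
      then have "y i = 0"
      proof (cases "i < n")
        case True
        then have "x i = - x i" using False by simp
        then have "y i = - y i" using ExD2[OF y True True] by simp
        then show ?thesis by simp
      next
        case False
        then show ?thesis using ExD3[OF y] by (simp add: Rn_def)
      qed
      then show ?thesis using sum_bvec0[of i n x, OF False] by simp
    qed
    finally show "y i = (\<Sum>w\<in>bvec n x ` Vx n x. fscale (cv (THE v. v \<in> Vx n x \<and> bvec n x v = w)) w) i"
      by simp
  qed
  also have "\<dots> \<in> fs.span (bvec n x ` Vx n x)"
    by (intro fs.span_sum fs.span_scale fs.span_base)
  finally show "y \<in> fs.span (bvec n x ` Vx n x)" .
qed

lemma dim_good:
  assumes x: "x \<in> weyl n" and g: "good n x"
  shows "dimT n (Tx n x) = card (Vx n x)"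
proof -
  have sp: "fs.span (bvec n x ` Vx n x) = Esp n x"
    using Esp_span fs.span_minimal[OF _ Ex_subspace] bvec_Esp by blast
  have "dimT n (Tx n x) = fs.dim (fs.span (flat_of n (Tx n x)))"
    unfolding dimT_def by simp
  also have "\<dots> = fs.dim (fs.span (bvec n x ` Vx n x))" unfolding span_flat[OF x g] sp ..
  also have "\<dots> = card (bvec n x ` Vx n x)" by (rule fs.dim_span_eq_card_independent[OF bvec_indep])
  also have "\<dots> = card (Vx n x)" by (rule card_image[OF bvec_inj])
  finally show ?thesis .
qed

definition outerQ :: "nat \<Rightarrow> nat \<Rightarrow> nat \<Rightarrow> nat \<Rightarrow> (nat \<times> nat) set \<Rightarrow> (nat \<times> nat) set" where
  "outerQ u p q n' Q' = (\<lambda>(i, j). (i + u + p, j + u + p)) ` Q' \<union> {u..<u+p} \<times> {u+p+n'..<u+p+n'+q}"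

definition Zb :: "nat \<Rightarrow> nat \<Rightarrow> (nat \<times> nat) set" where
  "Zb a z = {(i, j). a \<le> i \<and> i \<le> j \<and> j < a + z}"

definition inner :: "nat \<Rightarrow> nat \<Rightarrow> (nat \<Rightarrow> real) \<Rightarrow> (nat \<Rightarrow> real)" where
  "inner s n' x = (\<lambda>i. if i < n' then x (i + s) else 0)"

lemma downclosed:
  assumes "Ss \<subseteq> {..<n}" "\<And>i j. i \<le> j \<Longrightarrow> j \<in> Ss \<Longrightarrow> i \<in> Ss"
  shows "Ss = {..<card Ss}"
proof (cases "Ss = {}")
  case True then show ?thesis by simp
next
  case False
  have fin: "finite Ss" using assms(1) finite_subset by blast
  define m where "m = Max Ss"
  have "Ss = {..m}"
  proof
    show "Ss \<subseteq> {..m}" using fin m_def by auto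
    show "{..m} \<subseteq> Ss" using assms(2) Max_in[OF fin False] m_def by auto
  qed
  then show ?thesis by (simp add: lessThan_Suc_atMost[symmetric])
qed

lemma weyl_mono: "x \<in> weyl n \<Longrightarrow> i \<le> j \<Longrightarrow> j < n \<Longrightarrow> x j \<le> x i"
  by (simp add: weyl_def)

lemma weyl_R: "x \<in> weyl n \<Longrightarrow> j \<ge> n \<Longrightarrow> x j = 0"
  by (simp add: weyl_def Rn_def)

lemma thr_gt:
  assumes "x \<in> weyl n"
  shows "{i. i < n \<and> t < x i} = {..<card {i. i < n \<and> t < x i}}"
  by (rule downclosed[of _ n]) (use weyl_mono[OF assms] in \<open>auto intro: less_le_trans\<close>)

lemma thr_ge:
  assumes "x \<in> weyl n"
  shows "{i. i < n \<and> t \<le> x i} = {..<card {i. i < n \<and> t \<le> x i}}"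
  by (rule downclosed[of _ n]) (use weyl_mono[OF assms] in \<open>auto intro: order_trans\<close>)

lemma thr_gt_iff:
  assumes "x \<in> weyl n" "i < n"
  shows "t < x i \<longleftrightarrow> i < card {i. i < n \<and> t < x i}"
  using thr_gt[OF assms(1), of t] assms(2) by (metis (no_types, lifting) lessThan_iff mem_Collect_eq)

lemma thr_ge_iff:
  assumes "x \<in> weyl n" "i < n"
  shows "t \<le> x i \<longleftrightarrow> i < card {i. i < n \<and> t \<le> x i}"
  using thr_ge[OF assms(1), of t] assms(2) by (metis (no_types, lifting) lessThan_iff mem_Collect_eq)

lemma Tx_iff: "x \<in> weyl n \<Longrightarrow> (i, j) \<in> Tx n x \<longleftrightarrow> i \<le> j \<and> j < n \<and> lf (i, j) x = 0"
  by (auto simp: Tx_def wpairs_def hyp_lf weyl_def)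

lemma inner_weyl:
  assumes "x \<in> weyl n" "s + n' \<le> n"
  shows "inner s n' x \<in> weyl n'"
  using assms by (auto simp: weyl_def Rn_def inner_def)

lemma GL:
  assumes x: "x \<in> weyl n" and c: "c > 0" and nn: "n = u + p + n' + q + w"
    and L: "\<And>i. i < n \<Longrightarrow> c < x i \<longleftrightarrow> i < u"
    and P: "\<And>i. i < n \<Longrightarrow> x i = c \<longleftrightarrow> u \<le> i \<and> i < u + p"
    and N: "\<And>i. i < n \<Longrightarrow> x i = - c \<longleftrightarrow> u + p + n' \<le> i \<and> i < u + p + n' + q"
    and R: "\<And>i. i < n \<Longrightarrow> x i < - c \<longleftrightarrow> u + p + n' + q \<le> i"
    and nm: "\<And>i j. i < n \<Longrightarrow> j < n \<Longrightarrow> c < x i \<Longrightarrow> x i + x j \<noteq> 0"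
  shows "Tx n x = outerQ u p q n' (Tx n' (inner (u + p) n' x))"
proof -
  let ?x = "inner (u + p) n' x"
  have xi: "?x \<in> weyl n'" using inner_weyl[OF x, of "u + p" n'] nn by simp
  have I: "- c < x i \<and> x i < c" if "u + p \<le> i" "i < u + p + n'" for i
  proof -
    have "i < n" using that nn by simp
    then have "\<not> c < x i" "x i \<noteq> c" "x i \<noteq> - c" "\<not> x i < - c" using L P N R that by auto
    then show ?thesis by auto
  qed
  show ?thesis
  proof (rule set_eqI, clarify)
    fix i j
    show "(i, j) \<in> Tx n x \<longleftrightarrow> (i, j) \<in> outerQ u p q n' (Tx n' ?x)"
    proof
      assume "(i, j) \<in> Tx n x"
      then have ij: "i \<le> j" "j < n" and l: "lf (i, j) x = 0" using Tx_iff[OF x] by auto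
      have "i < n" using ij by simp
      consider "i < u" | "u \<le> i" "i < u + p" | "u + p \<le> i" "i < u + p + n'" | "u + p + n' \<le> i"
        by linarith
      then show "(i, j) \<in> outerQ u p q n' (Tx n' ?x)"
      proof cases
        case 1
        then have "c < x i" using L \<open>i < n\<close> by simp
        show ?thesis
        proof (cases "i = j")
          case True then show ?thesis using l \<open>c < x i\<close> c by (simp add: lf_def)
        next
          case False then show ?thesis using l nm[OF \<open>i < n\<close> ij(2) \<open>c < x i\<close>] by (simp add: lf_def)
        qed
      next
        case 2
        then have xi: "x i = c" using P \<open>i < n\<close> by simp
        have "i \<noteq> j" using l xi c by (auto simp: lf_def)
        then have "x j = - c" using l xi by (simp add: lf_def)
        then have "u + p + n' \<le> j \<and> j < u + p + n' + q" using N ij(2) by simp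
        then show ?thesis using 2 by (auto simp: outerQ_def)
      next
        case 3
        have Ii: "- c < x i \<and> x i < c" using I 3 by simp
        have jin: "j < u + p + n'"
        proof (cases "i = j")
          case True then show ?thesis using 3 by simp
        next
          case False
          then have "x j = - x i" using l by (simp add: lf_def)
          then have "\<not> (u + p + n' \<le> j)"
            using N[OF ij(2)] R[OF ij(2)] Ii by (cases "j < u + p + n' + q") auto
          then show ?thesis by simp
        qed
        define i' where "i' = i - (u + p)"
        define j' where "j' = j - (u + p)"
        have e: "i = i' + u + p" "j = j' + u + p" using 3 ij unfolding i'_def j'_def by auto
        have "(i', j') \<in> Tx n' ?x"
          unfolding Tx_iff[OF xi] using e ij jin l by (auto simp: lf_def inner_def add.assoc)
        then show ?thesis unfolding outerQ_def using e by force
      next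
        case 4
        have xi: "x i < 0"
        proof (cases "i < u + p + n' + q")
          case True then show ?thesis using N[OF \<open>i < n\<close>] 4 c by simp
        next
          case False then show ?thesis using R[OF \<open>i < n\<close>] 4 c by simp
        qed
        moreover have "x j \<le> x i" using weyl_mono[OF x ij] .
        ultimately show ?thesis using l by (auto simp: lf_def split: if_splits)
      qed
    next
      assume "(i, j) \<in> outerQ u p q n' (Tx n' ?x)"
      then consider (a) i' j' where "(i', j') \<in> Tx n' ?x" "i = i' + u + p" "j = j' + u + p"
        | (b) "u \<le> i" "i < u + p" "u + p + n' \<le> j" "j < u + p + n' + q"
        unfolding outerQ_def by auto
      then show "(i, j) \<in> Tx n x"
      proof cases
        case a
        then have "i' \<le> j'" "j' < n'" "lf (i', j') ?x = 0" using Tx_iff[OF xi] by auto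
        then show ?thesis unfolding Tx_iff[OF x] using a nn by (auto simp: lf_def inner_def add.assoc)
      next
        case b
        have "x i = c" "x j = - c" using P N b nn by auto
        then show ?thesis unfolding Tx_iff[OF x] using b nn by (auto simp: lf_def)
      qed
    qed
  qed
qed

lemma decomp:
  assumes x: "x \<in> weyl n"
  shows "(\<exists>a z. a + z \<le> n \<and> Tx n x = Zb a z) \<or>
    (\<exists>u p q w n'. 1 \<le> p \<and> 1 \<le> q \<and> n = u + p + n' + q + w \<and>
       Tx n x = outerQ u p q n' (Tx n' (inner (u + p) n' x)))"
proof (cases "\<exists>i<n. \<exists>j<n. 0 < x i \<and> x i + x j = 0")
  case False
  define a where "a = card {i. i < n \<and> 0 < x i}"
  define b where "b = card {i. i < n \<and> 0 \<le> x i}"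
  have ab: "a \<le> b" unfolding a_def b_def by (rule card_mono) auto
  have bn: "b \<le> n" unfolding b_def
    using card_mono[of "{..<n}" "{i. i < n \<and> 0 \<le> x i}"] by auto
  have zL: "0 < x i \<longleftrightarrow> i < a" if "i < n" for i
    using thr_gt_iff[OF x that, of 0] unfolding a_def .
  have zR: "0 \<le> x i \<longleftrightarrow> i < b" if "i < n" for i
    using thr_ge_iff[OF x that, of 0] unfolding b_def .
  have z1: "x i = 0" if "i < n" "a \<le> i" "i < b" for i
  proof -
    have "\<not> 0 < x i" using zL[OF that(1)] that(2) by simp
    moreover have "0 \<le> x i" using zR[OF that(1)] that(3) by simp
    ultimately show ?thesis by simp
  qed
  have z2: "a \<le> i \<and> i < b" if "i < n" "x i = 0" for i
    using zL[OF that(1)] zR[OF that(1)] that(2) by simp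
  have "Tx n x = Zb a (b - a)"
  proof (rule set_eqI, clarify)
    fix i j
    show "(i, j) \<in> Tx n x \<longleftrightarrow> (i, j) \<in> Zb a (b - a)"
    proof
      assume "(i, j) \<in> Tx n x"
      then have ij: "i \<le> j" "j < n" and l: "lf (i, j) x = 0" using Tx_iff[OF x] by auto
      have "x i = 0 \<and> x j = 0"
      proof (cases "i = j")
        case True then show ?thesis using l by (simp add: lf_def)
      next
        case ne: False
        then have s: "x i + x j = 0" using l by (simp add: lf_def)
        have "i < n" using ij by simp
        then have "\<not> 0 < x i" using False s ij(2) by blast
        moreover have "\<not> x i < 0" using weyl_mono[OF x ij] s by linarith
        ultimately show ?thesis using s by linarith
      qed
      then have "a \<le> i" "j < b" using z2[of i] z2[of j] ij by auto
      then show "(i, j) \<in> Zb a (b - a)" using ij(1) ab by (simp add: Zb_def)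
    next
      assume "(i, j) \<in> Zb a (b - a)"
      then have h: "a \<le> i" "i \<le> j" "j < b" using ab by (auto simp: Zb_def)
      then have "x i = 0" "x j = 0" using z1[of i] z1[of j] bn by auto
      then show "(i, j) \<in> Tx n x" unfolding Tx_iff[OF x] using h bn by (simp add: lf_def)
    qed
  qed
  then have "a + (b - a) \<le> n \<and> Tx n x = Zb a (b - a)" using ab bn by simp
  then show ?thesis by blast
next
  case True
  define M where "M = {x i | i. i < n \<and> 0 < x i \<and> (\<exists>j<n. x i + x j = 0)}"
  have finM: "finite M" unfolding M_def by (rule finite_subset[of _ "x ` {..<n}"]) auto
  have neM: "M \<noteq> {}" using True unfolding M_def by blast
  define c where "c = Max M"
  have "c \<in> M" unfolding c_def using finM neM by (rule Max_in)
  then obtain i0 j0 where i0: "i0 < n" "x i0 = c" "0 < c" "j0 < n" "x i0 + x j0 = 0"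
    unfolding M_def by auto
  have cmax: "x i \<le> c" if "i < n" "0 < x i" "j < n" "x i + x j = 0" for i j
    unfolding c_def using finM that unfolding M_def by (intro Max_ge) auto
  define u where "u = card {i. i < n \<and> c < x i}"
  define up where "up = card {i. i < n \<and> c \<le> x i}"
  define upn where "upn = card {i. i < n \<and> - c < x i}"
  define upnq where "upnq = card {i. i < n \<and> - c \<le> x i}"
  have c1: "u \<le> up" unfolding u_def up_def by (rule card_mono) auto
  have c2: "up \<le> upn" unfolding upn_def up_def using i0(3) by (intro card_mono) auto
  have c3: "upn \<le> upnq" unfolding upn_def upnq_def by (rule card_mono) auto
  have c4: "upnq \<le> n" unfolding upnq_def
    using card_mono[of "{..<n}" "{i. i < n \<and> - c \<le> x i}"] by auto
  have iL: "c < x i \<longleftrightarrow> i < u" if "i < n" for i using thr_gt_iff[OF x that] u_def by simp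
  have iP: "c \<le> x i \<longleftrightarrow> i < up" if "i < n" for i using thr_ge_iff[OF x that] up_def by simp
  have iN: "- c < x i \<longleftrightarrow> i < upn" if "i < n" for i using thr_gt_iff[OF x that] upn_def by simp
  have iR: "- c \<le> x i \<longleftrightarrow> i < upnq" if "i < n" for i using thr_ge_iff[OF x that] upnq_def by simp
  define p where "p = up - u"
  define n' where "n' = upn - up"
  define q where "q = upnq - upn"
  define w where "w = n - upnq"
  have e: "u + p = up" "u + p + n' = upn" "u + p + n' + q = upnq" "n = u + p + n' + q + w"
    using c1 c2 c3 c4 unfolding p_def n'_def q_def w_def by auto
  have p1: "1 \<le> p" using iL[OF i0(1)] iP[OF i0(1)] i0(2) e(1) by auto
  have "x j0 = - c" using i0 by simp
  then have q1: "1 \<le> q" using iN[OF i0(4)] iR[OF i0(4)] e(2,3) i0(3) by auto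
  have "Tx n x = outerQ u p q n' (Tx n' (inner (u + p) n' x))"
  proof (rule GL[OF x i0(3) e(4)])
    fix i assume i: "i < n"
    show "c < x i \<longleftrightarrow> i < u" using iL[OF i] .
    show "x i = c \<longleftrightarrow> u \<le> i \<and> i < u + p" using iL[OF i] iP[OF i] e(1) by auto
    show "x i = - c \<longleftrightarrow> u + p + n' \<le> i \<and> i < u + p + n' + q" using iN[OF i] iR[OF i] e by auto
    show "x i < - c \<longleftrightarrow> u + p + n' + q \<le> i" using iR[OF i] e by auto
  next
    fix i j assume "i < n" "j < n" "c < x i"
    then show "x i + x j \<noteq> 0" using cmax[of i j] i0(3) by auto
  qed
  then show ?thesis using p1 q1 e(4) by blast
qed

definition midpt :: "nat \<Rightarrow> nat \<Rightarrow> nat \<Rightarrow> nat \<Rightarrow> real" where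
  "midpt n a z = (\<lambda>i. if i < a then real (2 * n + 2 - i) else if i < a + z then 0
     else if i < n then - real (i + 1) else 0)"

lemma mid_weyl: "a + z \<le> n \<Longrightarrow> midpt n a z \<in> weyl n"
  by (auto simp: weyl_def Rn_def midpt_def)

lemma mid_Tx:
  assumes "a + z \<le> n"
  shows "Tx n (midpt n a z) = Zb a z"
proof (rule set_eqI, clarify)
  fix i j
  show "(i, j) \<in> Tx n (midpt n a z) \<longleftrightarrow> (i, j) \<in> Zb a z"
    unfolding Tx_iff[OF mid_weyl[OF assms]] using assms
    by (auto simp: lf_def midpt_def Zb_def split: if_splits)
qed

lemma mid_good: "a + z \<le> n \<Longrightarrow> good n (midpt n a z)"
  by (auto simp: good_def midpt_def split: if_splits)

lemma mid_Vx:
  assumes az: "a + z \<le> n"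
  shows "card (Vx n (midpt n a z)) = n - z"
proof -
  let ?x = "midpt n a z"
  let ?I = "{..<a} \<union> {a + z..<n}"
  have nz: "?x i \<noteq> 0 \<longleftrightarrow> i \<in> ?I" if "i < n" for i
    using that by (simp add: midpt_def)
  have "Vx n ?x = (\<lambda>i. \<bar>?x i\<bar>) ` ?I"
  proof
    show "Vx n ?x \<subseteq> (\<lambda>i. \<bar>?x i\<bar>) ` ?I"
    proof
      fix v assume "v \<in> Vx n ?x"
      then obtain i where "i < n" "?x i \<noteq> 0" "v = \<bar>?x i\<bar>" by (auto simp: Vx_def)
      then show "v \<in> (\<lambda>i. \<bar>?x i\<bar>) ` ?I" using nz by blast
    qed
    show "(\<lambda>i. \<bar>?x i\<bar>) ` ?I \<subseteq> Vx n ?x"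
    proof
      fix v assume "v \<in> (\<lambda>i. \<bar>?x i\<bar>) ` ?I"
      then obtain i where i: "i \<in> ?I" "v = \<bar>?x i\<bar>" by blast
      then have "i < n" using az by auto
      then show "v \<in> Vx n ?x" using i nz unfolding Vx_def by blast
    qed
  qed
  moreover have "inj_on (\<lambda>i. \<bar>?x i\<bar>) ?I"
  proof
    fix i j assume i: "i \<in> ?I" and j: "j \<in> ?I" and e: "\<bar>?x i\<bar> = \<bar>?x j\<bar>"
    have ai: "\<bar>?x i\<bar> = (if i < a then real (2 * n + 2 - i) else real (i + 1))"
      using i az by (auto simp: midpt_def)
    have aj: "\<bar>?x j\<bar> = (if j < a then real (2 * n + 2 - j) else real (j + 1))"
      using j az by (auto simp: midpt_def)
    have "i < n" "j < n" using i j az by auto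
    then show "i = j" using e ai aj by (auto split: if_splits)
  qed
  moreover have "card ?I = n - z" using az by (subst card_Un_disjoint) auto
  ultimately show ?thesis by (simp add: card_image)
qed

definition optp :: "nat \<Rightarrow> nat \<Rightarrow> nat \<Rightarrow> nat \<Rightarrow> nat \<Rightarrow> (nat \<Rightarrow> real) \<Rightarrow> nat \<Rightarrow> real" where
  "optp u p q w n' y = (\<lambda>i. if i < u then real (w + 4 + u - i) else if i < u + p then 2
     else if i < u + p + n' then y (i - (u + p)) else if i < u + p + n' + q then -2
     else if i < u + p + n' + q + w then - real (i - (u + p + n' + q) + 3) else 0)"

locale optloc =
  fixes u p q w n' n :: nat and y :: "nat \<Rightarrow> real"
  assumes yw: "y \<in> weyl n'" and yb1: "\<And>i. - 1 < y i" and yb2: "\<And>i. y i < 1"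
    and p1: "1 \<le> p" and q1: "1 \<le> q" and nn: "n = u + p + n' + q + w"
begin

abbreviation "xo \<equiv> optp u p q w n' y"

lemma ymono: "i \<le> j \<Longrightarrow> j < n' \<Longrightarrow> y j \<le> y i"
  using weyl_mono[OF yw] .

lemma opt_weyl: "xo \<in> weyl n"
  unfolding weyl_def Rn_def
proof (intro CollectI conjI allI impI)
  fix i assume "n \<le> i" then show "xo i = 0" using nn by (simp add: optp_def)
next
  fix i j assume ij: "i \<le> j \<and> j < n"
  then show "xo j \<le> xo i"
    using nn ymono[of "i - (u + p)" "j - (u + p)"] yb1[of "i - (u + p)"] yb2[of "i - (u + p)"]
      yb1[of "j - (u + p)"] yb2[of "j - (u + p)"]
    by (simp add: optp_def) linarith
qed

lemma opt_inner: "inner (u + p) n' xo = y"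
proof
  fix i show "inner (u + p) n' xo i = y i"
    using weyl_R[OF yw, of i] by (simp add: inner_def optp_def)
qed

lemma opt_Tx: "Tx n xo = outerQ u p q n' (Tx n' y)"
proof -
  have "Tx n xo = outerQ u p q n' (Tx n' (inner (u + p) n' xo))"
  proof (rule GL[OF opt_weyl _ nn])
    show "(0::real) < 2" by simp
    fix i assume i: "i < n"
    note b = yb1[of "i - (u + p)"] yb2[of "i - (u + p)"]
    show "2 < xo i \<longleftrightarrow> i < u" using i nn b by (simp add: optp_def)
    show "xo i = 2 \<longleftrightarrow> u \<le> i \<and> i < u + p" using i nn b by (simp add: optp_def)
    show "xo i = - 2 \<longleftrightarrow> u + p + n' \<le> i \<and> i < u + p + n' + q" using i nn b by (simp add: optp_def)
    show "xo i < - 2 \<longleftrightarrow> u + p + n' + q \<le> i" using i nn b by (simp add: optp_def)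
  next
    fix i j assume ij: "i < n" "j < n" "2 < xo i"
    then have iu: "i < u" using nn yb2[of "i - (u + p)"] by (simp add: optp_def split: if_splits)
    then have xi: "xo i = real (w + 4 + u - i)" by (simp add: optp_def)
    have "xo j > - real (w + 4 + u - i)"
      using ij(2) nn yb1[of "j - (u + p)"] iu by (simp add: optp_def)
    then show "xo i + xo j \<noteq> 0" using xi by simp
  qed
  then show ?thesis unfolding opt_inner .
qed

lemma opt_good:
  assumes g: "good n' y"
  shows "good n xo"
  unfolding good_def
proof (intro allI impI)
  fix i j assume i: "i < n" and j: "j < n" and e: "xo i = xo j"
  note bi = yb1[of "i - (u + p)"] yb2[of "i - (u + p)"]
  note bj = yb1[of "j - (u + p)"] yb2[of "j - (u + p)"]
  consider "i < u" | "u \<le> i" "i < u + p" | "u + p \<le> i" "i < u + p + n'"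
    | "u + p + n' \<le> i" "i < u + p + n' + q" | "u + p + n' + q \<le> i" by linarith
  then show "i = j \<or> xo i = 0 \<or> (\<exists>l<n. xo l = - xo i)"
  proof cases
    case 1
    then have "j < u" using e j nn bj by (simp add: optp_def split: if_splits)
    then have "i = j" using e 1 by (simp add: optp_def)
    then show ?thesis by simp
  next
    case 2
    have "xo (u + p + n') = - xo i" using 2 q1 by (simp add: optp_def)
    moreover have "u + p + n' < n" using nn q1 by simp
    ultimately show ?thesis by blast
  next
    case 3
    then have xi: "xo i = y (i - (u + p))" by (simp add: optp_def)
    have j3: "u + p \<le> j \<and> j < u + p + n'" using e j nn bi bj 3 by (simp add: optp_def split: if_splits)
    then have xj: "xo j = y (j - (u + p))" by (simp add: optp_def)
    have "i - (u + p) < n'" "j - (u + p) < n'" using 3 j3 by auto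
    then consider "i - (u + p) = j - (u + p)" | "y (i - (u + p)) = 0"
      | l where "l < n'" "y l = - y (i - (u + p))"
      using g e xi xj unfolding good_def by metis
    then show ?thesis
    proof cases
      case 1 then have "i = j" using 3 j3 by linarith
      then show ?thesis by simp
    next
      case 2 then show ?thesis using xi by simp
    next
      case l: 3
      have "xo (l + (u + p)) = y l" using l(1) by (simp add: optp_def)
      moreover have "l + (u + p) < n" using l(1) nn by simp
      ultimately show ?thesis using l(2) xi by (metis)
    qed
  next
    case 4
    have "xo u = - xo i" using 4 p1 by (simp add: optp_def)
    moreover have "u < n" using nn p1 by simp
    ultimately show ?thesis by blast
  next
    case 5
    then have "u + p + n' + q \<le> j" using e j i nn bj by (simp add: optp_def split: if_splits)
    then have "i = j" using e 5 i j nn by (simp add: optp_def)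
    then show ?thesis by simp
  qed
qed

lemma opt_Vx: "card (Vx n xo) = card (Vx n' y) + u + w + 1"
proof -
  define K where "K = {w + 5..<w + 5 + u} \<union> {2} \<union> {3..<w + 3}"
  have VE: "Vx n xo = real ` K \<union> Vx n' y"
  proof
    show "Vx n xo \<subseteq> real ` K \<union> Vx n' y"
    proof
      fix v assume "v \<in> Vx n xo"
      then obtain i where i: "i < n" "xo i \<noteq> 0" "v = \<bar>xo i\<bar>" by (auto simp: Vx_def)
      consider "i < u" | "u \<le> i" "i < u + p" | "u + p \<le> i" "i < u + p + n'"
        | "u + p + n' \<le> i" "i < u + p + n' + q" | "u + p + n' + q \<le> i" by linarith
      then show "v \<in> real ` K \<union> Vx n' y"
      proof cases
        case 1
        then have "v = real (w + 4 + u - i)" "w + 4 + u - i \<in> K" using i by (auto simp: optp_def K_def)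
        then show ?thesis by blast
      next
        case 2
        then have "v = real 2" "2 \<in> K" using i by (auto simp: optp_def K_def)
        then show ?thesis by blast
      next
        case 3
        then have "v = \<bar>y (i - (u + p))\<bar>" "y (i - (u + p)) \<noteq> 0" "i - (u + p) < n'"
          using i by (auto simp: optp_def)
        then show ?thesis unfolding Vx_def by blast
      next
        case 4
        then have "v = real 2" "2 \<in> K" using i by (auto simp: optp_def K_def)
        then show ?thesis by blast
      next
        case 5
        then have "v = real (i - (u + p + n' + q) + 3)" "i - (u + p + n' + q) + 3 \<in> K"
          using i nn by (auto simp: optp_def K_def)
        then show ?thesis by blast
      qed
    qed
    show "real ` K \<union> Vx n' y \<subseteq> Vx n xo"
    proof
      fix v assume "v \<in> real ` K \<union> Vx n' y"
      then consider k where "k \<in> K" "v = real k" | "v \<in> Vx n' y" by blast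
      then show "v \<in> Vx n xo"
      proof cases
        case 1
        consider "k \<in> {w + 5..<w + 5 + u}" | "k = 2" | "k \<in> {3..<w + 3}" using 1 by (auto simp: K_def)
        then show ?thesis
        proof cases
          case a: 1
          define i where "i = w + 4 + u - k"
          have "i < u" "i < n" "xo i = real k" using a nn unfolding i_def by (auto simp: optp_def)
          moreover have "k \<ge> 2" using a by simp
          ultimately have "i < n \<and> xo i \<noteq> 0 \<and> v = \<bar>xo i\<bar>" using 1 by simp
          then show ?thesis unfolding Vx_def by blast
        next
          case 2
          have "u < n" "xo u = real k" using 2 nn p1 by (auto simp: optp_def)
          then have "u < n \<and> xo u \<noteq> 0 \<and> v = \<bar>xo u\<bar>" using 1 2 by simp
          then show ?thesis unfolding Vx_def by blast
        next
          case a: 3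
          define i where "i = u + p + n' + q + (k - 3)"
          have "i < n" "xo i = - real k" using a nn unfolding i_def by (auto simp: optp_def)
          moreover have "k \<ge> 3" using a by simp
          ultimately have "i < n \<and> xo i \<noteq> 0 \<and> v = \<bar>xo i\<bar>" using 1 by simp
          then show ?thesis unfolding Vx_def by blast
        qed
      next
        case 2
        then obtain i where i: "i < n'" "y i \<noteq> 0" "v = \<bar>y i\<bar>" by (auto simp: Vx_def)
        have "i + (u + p) < n" "xo (i + (u + p)) = y i" using i nn by (auto simp: optp_def)
        then have "i + (u + p) < n \<and> xo (i + (u + p)) \<noteq> 0 \<and> v = \<bar>xo (i + (u + p))\<bar>" using i by simp
        then show ?thesis unfolding Vx_def by blast
      qed
    qed
  qed
  have disj: "real ` K \<inter> Vx n' y = {}"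
  proof -
    have "v < 1" if "v \<in> Vx n' y" for v using that yb1 yb2 by (auto simp: Vx_def abs_if)
    moreover have "v \<ge> 2" if "v \<in> real ` K" for v using that by (auto simp: K_def)
    ultimately show ?thesis by force
  qed
  have cK: "card K = u + 1 + w" unfolding K_def by (subst card_Un_disjoint, auto)+
  have "card (Vx n xo) = card (real ` K) + card (Vx n' y)"
    unfolding VE using disj Vx_fin[of n' y] by (intro card_Un_disjoint) (auto simp: K_def)
  also have "card (real ` K) = card K" by (rule card_image) (simp add: inj_on_def)
  finally show ?thesis using cK by simp
qed

end

lemma scale_weyl: "x \<in> weyl n \<Longrightarrow> c > 0 \<Longrightarrow> fscale c x \<in> weyl n"
  by (auto simp: weyl_def Rn_def intro: mult_left_mono)

lemma scale_Tx: "x \<in> weyl n \<Longrightarrow> c > 0 \<Longrightarrow> Tx n (fscale c x) = Tx n x"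
  by (auto simp: Tx_def hyp_lf lf_def weyl_def Rn_def distrib_left[symmetric])

lemma scale_good: "good n x \<Longrightarrow> c > 0 \<Longrightarrow> good n (fscale c x)"
  unfolding good_def
proof (intro allI impI)
  fix i j assume g: "\<forall>i<n. \<forall>j<n. x i = x j \<longrightarrow> i = j \<or> x i = 0 \<or> (\<exists>l<n. x l = - x i)"
    and c: "c > 0" and ij: "i < n" "j < n" and e: "fscale c x i = fscale c x j"
  then have "x i = x j" by simp
  then have "i = j \<or> x i = 0 \<or> (\<exists>l<n. x l = - x i)" using g ij by blast
  then show "i = j \<or> fscale c x i = 0 \<or> (\<exists>l<n. fscale c x l = - fscale c x i)" by auto
qed

lemma scale_Vx: "c > 0 \<Longrightarrow> card (Vx n (fscale c x)) = card (Vx n x)"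
proof -
  assume c: "c > 0"
  have "Vx n (fscale c x) = (\<lambda>v. c * v) ` Vx n x"
    using c by (auto simp: Vx_def abs_mult image_iff)
  moreover have "inj_on (\<lambda>v. c * v) (Vx n x)" using c by (auto simp: inj_on_def)
  ultimately show ?thesis by (simp add: card_image)
qed

lemma outer_real:
  assumes x: "x \<in> weyl n'" and p1: "1 \<le> p" and q1: "1 \<le> q" and nn: "n = u + p + n' + q + w"
  shows "\<exists>z \<in> weyl n. Tx n z = outerQ u p q n' (Tx n' x) \<and>
     (good n' x \<longrightarrow> good n z \<and> card (Vx n z) = card (Vx n' x) + u + w + 1)"
proof -
  define K where "K = 1 + (\<Sum>i<n'. \<bar>x i\<bar>)"
  have K1: "K \<ge> 1" unfolding K_def by (simp add: sum_nonneg)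
  have bnd: "\<bar>x i\<bar> < K" for i
  proof (cases "i < n'")
    case True
    then have "\<bar>x i\<bar> \<le> (\<Sum>i<n'. \<bar>x i\<bar>)" by (intro member_le_sum) auto
    then show ?thesis unfolding K_def by simp
  next
    case False then show ?thesis using weyl_R[OF x, of i] K1 by simp
  qed
  define y where "y = fscale (1 / K) x"
  have cK: "1 / K > 0" using K1 by simp
  have yw: "y \<in> weyl n'" unfolding y_def using scale_weyl[OF x cK] .
  have yb: "- 1 < y i" "y i < 1" for i
    using bnd[of i] K1 by (auto simp: y_def abs_less_iff field_simps)
  interpret optloc u p q w n' n y
    using yw yb p1 q1 nn by unfold_locales auto
  have "Tx n' y = Tx n' x" unfolding y_def using scale_Tx[OF x cK] .
  moreover have "good n' x \<Longrightarrow> good n' y" unfolding y_def using scale_good cK by blast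
  moreover have "card (Vx n' y) = card (Vx n' x)" unfolding y_def using scale_Vx[OF cK] .
  ultimately show ?thesis using opt_weyl opt_Tx opt_good opt_Vx by metis
qed

lemma good_rep: "x \<in> weyl n \<Longrightarrow> \<exists>y \<in> weyl n. good n y \<and> Tx n y = Tx n x"
proof (induction n arbitrary: x rule: less_induct)
  case (less n)
  from decomp[OF less.prems] show ?case
  proof
    assume "\<exists>a z. a + z \<le> n \<and> Tx n x = Zb a z"
    then obtain a z where az: "a + z \<le> n" "Tx n x = Zb a z" by blast
    then show ?thesis using mid_weyl mid_good mid_Tx by metis
  next
    assume "\<exists>u p q w n'. 1 \<le> p \<and> 1 \<le> q \<and> n = u + p + n' + q + w \<and>
       Tx n x = outerQ u p q n' (Tx n' (inner (u + p) n' x))"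
    then obtain u p q w n' where d: "1 \<le> p" "1 \<le> q" "n = u + p + n' + q + w"
      "Tx n x = outerQ u p q n' (Tx n' (inner (u + p) n' x))" by blast
    have xi: "inner (u + p) n' x \<in> weyl n'" using inner_weyl[OF less.prems, of "u + p" n'] d(3) by simp
    have "n' < n" using d by simp
    then obtain y' where y': "y' \<in> weyl n'" "good n' y'" "Tx n' y' = Tx n' (inner (u + p) n' x)"
      using less.IH[OF _ xi] by blast
    obtain z where "z \<in> weyl n" "Tx n z = outerQ u p q n' (Tx n' y')" "good n z"
      using outer_real[OF y'(1) d(1,2,3)] y'(2) by blast
    then show ?thesis using d(4) y'(3) by metis
  qed
qed

lemma dim_mid: "a + z \<le> n \<Longrightarrow> dimT n (Zb a z) = n - z"
  using dim_good[OF mid_weyl mid_good] mid_Tx mid_Vx by metis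

lemma dim_outer:
  assumes Q: "Q' \<in> Real n'" and p1: "1 \<le> p" and q1: "1 \<le> q" and nn: "n = u + p + n' + q + w"
  shows "dimT n (outerQ u p q n' Q') = dimT n' Q' + u + w + 1"
proof -
  obtain x where x: "x \<in> weyl n'" "Q' = Tx n' x" using Q by (auto simp: Real_def)
  obtain y where y: "y \<in> weyl n'" "good n' y" "Tx n' y = Q'" using good_rep[OF x(1)] x(2) by metis
  obtain z where z: "z \<in> weyl n" "Tx n z = outerQ u p q n' Q'" "good n z"
    "card (Vx n z) = card (Vx n' y) + u + w + 1"
    using outer_real[OF y(1) p1 q1 nn] y(2,3) by blast
  show ?thesis using dim_good[OF z(1) z(3)] dim_good[OF y(1) y(2)] z(2,4) y(3) by simp
qed

lemma outer_fst: "(i, j) \<in> outerQ u p q n' Q' \<Longrightarrow> u \<le> i"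
  by (auto simp: outerQ_def)

lemma outer_row: "p \<ge> 1 \<Longrightarrow> (u, j) \<in> outerQ u p q n' Q' \<longleftrightarrow> u + p + n' \<le> j \<and> j < u + p + n' + q"
  by (auto simp: outerQ_def)

lemma outer_col:
  assumes "Q' \<subseteq> wpairs n'" "q \<ge> 1"
  shows "(i, u + p + n' + q - 1) \<in> outerQ u p q n' Q' \<longleftrightarrow> u \<le> i \<and> i < u + p"
  using assms by (auto simp: outerQ_def wpairs_def)

lemma outer_inner:
  assumes "Q' \<subseteq> wpairs n'"
  shows "((i + u + p, j + u + p) \<in> outerQ u p q n' Q' \<and> j < n') \<longleftrightarrow> (i, j) \<in> Q'"
  using assms by (auto simp: outerQ_def wpairs_def)

lemma ivl_eq:
  assumes "{a1..<a1 + q1} = {a2..<a2 + q2}" "(q1::nat) \<ge> 1" "q2 \<ge> 1"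
  shows "a1 = a2 \<and> q1 = q2"
proof -
  have "a1 \<in> {a1..<a1 + q1}" "a2 \<in> {a2..<a2 + q2}" using assms(2,3) by simp_all
  then have "a1 \<in> {a2..<a2 + q2}" "a2 \<in> {a1..<a1 + q1}" using assms(1) by simp_all
  then have "a1 = a2" by simp
  moreover have "card {a1..<a1 + q1} = card {a2..<a2 + q2}" using assms(1) by simp
  ultimately show ?thesis by simp
qed

lemma outer_inj:
  assumes e: "outerQ u1 p1 q1 m1 Q1 = outerQ u2 p2 q2 m2 Q2"
    and Q: "Q1 \<subseteq> wpairs m1" "Q2 \<subseteq> wpairs m2"
    and pq: "p1 \<ge> 1" "q1 \<ge> 1" "p2 \<ge> 1" "q2 \<ge> 1"
  shows "u1 = u2 \<and> p1 = p2 \<and> q1 = q2 \<and> m1 = m2 \<and> Q1 = Q2"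
proof -
  have "(u1, u1 + p1 + m1) \<in> outerQ u1 p1 q1 m1 Q1" using pq by (simp add: outer_row)
  then have "u2 \<le> u1" using e outer_fst by metis
  moreover have "(u2, u2 + p2 + m2) \<in> outerQ u2 p2 q2 m2 Q2" using pq by (simp add: outer_row)
  then have "u1 \<le> u2" using e outer_fst by metis
  ultimately have u: "u1 = u2" by simp
  have "{u1 + p1 + m1..<u1 + p1 + m1 + q1} = {u1 + p2 + m2..<u1 + p2 + m2 + q2}"
  proof (rule set_eqI)
    fix j
    have "j \<in> {u1 + p1 + m1..<u1 + p1 + m1 + q1} \<longleftrightarrow> (u1, j) \<in> outerQ u1 p1 q1 m1 Q1"
      using outer_row[OF pq(1)] by simp
    also have "\<dots> \<longleftrightarrow> (u1, j) \<in> outerQ u2 p2 q2 m2 Q2" using e by simp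
    also have "\<dots> \<longleftrightarrow> j \<in> {u1 + p2 + m2..<u1 + p2 + m2 + q2}" using outer_row[OF pq(3)] u by simp
    finally show "j \<in> {u1 + p1 + m1..<u1 + p1 + m1 + q1} \<longleftrightarrow> j \<in> {u1 + p2 + m2..<u1 + p2 + m2 + q2}" .
  qed
  then have a: "u1 + p1 + m1 = u1 + p2 + m2" and q: "q1 = q2" using ivl_eq pq by blast+
  have "{u1..<u1 + p1} = {u1..<u1 + p2}"
  proof (rule set_eqI)
    fix i
    have "i \<in> {u1..<u1 + p1} \<longleftrightarrow> (i, u1 + p1 + m1 + q1 - 1) \<in> outerQ u1 p1 q1 m1 Q1"
      using outer_col[OF Q(1) pq(2)] by simp
    also have "\<dots> \<longleftrightarrow> (i, u2 + p2 + m2 + q2 - 1) \<in> outerQ u2 p2 q2 m2 Q2"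
    proof -
      have "u1 + p1 + m1 + q1 - 1 = u2 + p2 + m2 + q2 - 1" using a q u by simp
      then show ?thesis using e by simp
    qed
    also have "\<dots> \<longleftrightarrow> i \<in> {u1..<u1 + p2}" using outer_col[OF Q(2) pq(4)] u by simp
    finally show "i \<in> {u1..<u1 + p1} \<longleftrightarrow> i \<in> {u1..<u1 + p2}" .
  qed
  then have p: "p1 = p2" using ivl_eq pq by blast
  have m: "m1 = m2" using a p by simp
  have "Q1 = Q2"
  proof (rule set_eqI, clarify)
    fix i j
    have "(i, j) \<in> Q1 \<longleftrightarrow> (i + u1 + p1, j + u1 + p1) \<in> outerQ u1 p1 q1 m1 Q1 \<and> j < m1"
      using outer_inner[OF Q(1)] by simp
    also have "\<dots> \<longleftrightarrow> (i + u2 + p2, j + u2 + p2) \<in> outerQ u2 p2 q2 m2 Q2 \<and> j < m2"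
      using e u p m by simp
    also have "\<dots> \<longleftrightarrow> (i, j) \<in> Q2" using outer_inner[OF Q(2)] by simp
    finally show "(i, j) \<in> Q1 \<longleftrightarrow> (i, j) \<in> Q2" .
  qed
  then show ?thesis using u p q m by simp
qed

lemma outer_not_mid:
  assumes "p \<ge> 1" "q \<ge> 1"
  shows "outerQ u p q n' Q' \<noteq> Zb a z"
proof
  assume e: "outerQ u p q n' Q' = Zb a z"
  have "(u, u + p + n') \<in> outerQ u p q n' Q'" using assms by (simp add: outer_row)
  then have "(u, u + p + n') \<in> Zb a z" using e by simp
  then have "(u, u) \<in> Zb a z" by (auto simp: Zb_def)
  then have "(u, u) \<in> outerQ u p q n' Q'" using e by simp
  then show False using assms by (simp add: outer_row)
qed

lemma Real_sub: "Q \<in> Real n \<Longrightarrow> Q \<subseteq> wpairs n"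
  by (auto simp: Real_def Tx_def)

definition Par :: "nat \<Rightarrow> (nat \<times> nat \<times> nat \<times> nat) set" where
  "Par n = {(u, p, q, w). 1 \<le> p \<and> 1 \<le> q \<and> u + p + q + w \<le> n}"

definition Mid :: "nat \<Rightarrow> (nat \<times> nat) set set" where
  "Mid n = {Zb a z | a z. a + z \<le> n}"

fun nr :: "nat \<Rightarrow> nat \<times> nat \<times> nat \<times> nat \<Rightarrow> nat" where
  "nr n (u, p, q, w) = n - (u + p + q + w)"

fun OQ :: "nat \<Rightarrow> nat \<times> nat \<times> nat \<times> nat \<Rightarrow> (nat \<times> nat) set \<Rightarrow> (nat \<times> nat) set" where
  "OQ n (u, p, q, w) = outerQ u p q (n - (u + p + q + w))"

fun bt :: "nat \<times> nat \<times> nat \<times> nat \<Rightarrow> nat" where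
  "bt (u, p, q, w) = u + w + 1"

lemma Real_dec: "Real n = Mid n \<union> (\<Union>t\<in>Par n. OQ n t ` Real (nr n t))"
proof
  show "Real n \<subseteq> Mid n \<union> (\<Union>t\<in>Par n. OQ n t ` Real (nr n t))"
  proof
    fix Q assume "Q \<in> Real n"
    then obtain x where x: "x \<in> weyl n" "Q = Tx n x" by (auto simp: Real_def)
    from decomp[OF x(1)] show "Q \<in> Mid n \<union> (\<Union>t\<in>Par n. OQ n t ` Real (nr n t))"
    proof
      assume "\<exists>a z. a + z \<le> n \<and> Tx n x = Zb a z"
      then have "Q \<in> Mid n" using x(2) by (auto simp: Mid_def)
      then show ?thesis by blast
    next
      assume "\<exists>u p q w n'. 1 \<le> p \<and> 1 \<le> q \<and> n = u + p + n' + q + w \<and>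
         Tx n x = outerQ u p q n' (Tx n' (inner (u + p) n' x))"
      then obtain u p q w n' where d: "1 \<le> p" "1 \<le> q" "n = u + p + n' + q + w"
        "Tx n x = outerQ u p q n' (Tx n' (inner (u + p) n' x))" by blast
      have xi: "inner (u + p) n' x \<in> weyl n'" using inner_weyl[OF x(1), of "u + p" n'] d(3) by simp
      have t: "(u, p, q, w) \<in> Par n" using d by (simp add: Par_def)
      have "nr n (u, p, q, w) = n'" using d by simp
      moreover have "Q = OQ n (u, p, q, w) (Tx n' (inner (u + p) n' x))" using d x(2) by simp
      ultimately have "Q \<in> OQ n (u, p, q, w) ` Real (nr n (u, p, q, w))"
        using xi by (auto simp: Real_def)
      then show ?thesis using t by blast
    qed
  qed
  show "Mid n \<union> (\<Union>t\<in>Par n. OQ n t ` Real (nr n t)) \<subseteq> Real n"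
  proof
    fix Q assume "Q \<in> Mid n \<union> (\<Union>t\<in>Par n. OQ n t ` Real (nr n t))"
    then consider "Q \<in> Mid n" | t where "t \<in> Par n" "Q \<in> OQ n t ` Real (nr n t)" by blast
    then show "Q \<in> Real n"
    proof cases
      case 1
      then obtain a z where "a + z \<le> n" "Q = Zb a z" by (auto simp: Mid_def)
      then show ?thesis using mid_weyl mid_Tx unfolding Real_def by (metis image_eqI)
    next
      case 2
      obtain u p q w where t: "t = (u, p, q, w)" by (cases t) auto
      then have pq: "1 \<le> p" "1 \<le> q" "u + p + q + w \<le> n" using 2(1) by (auto simp: Par_def)
      obtain x' where x': "x' \<in> weyl (nr n t)" "Q = OQ n t (Tx (nr n t) x')"
        using 2(2) by (auto simp: Real_def)
      have nn: "n = u + p + (nr n t) + q + w" using t pq by simp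
      obtain z where "z \<in> weyl n" "Tx n z = outerQ u p q (nr n t) (Tx (nr n t) x')"
        using outer_real[OF x'(1) pq(1,2) nn] by blast
      moreover have "OQ n t (Tx (nr n t) x') = outerQ u p q (nr n t) (Tx (nr n t) x')" using t by simp
      ultimately show ?thesis using x'(2) unfolding Real_def by (metis image_eqI)
    qed
  qed
qed

lemma Zb0: "Zb a 0 = {}" by (auto simp: Zb_def)

lemma Zb_inj: "Zb a z = Zb a' z \<Longrightarrow> z \<ge> 1 \<Longrightarrow> a = a'"
proof -
  assume e: "Zb a z = Zb a' z" and z: "z \<ge> 1"
  have "(a, a) \<in> Zb a z" "(a', a') \<in> Zb a' z" using z by (auto simp: Zb_def)
  then have "(a, a) \<in> Zb a' z" "(a', a') \<in> Zb a z" using e by auto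
  then show "a = a'" by (auto simp: Zb_def)
qed

lemma Mid_count: "card {Q \<in> Mid n. dimT n Q = k} = (if k = n then 1 else if k < n then k + 1 else 0)"
proof -
  have M: "{Q \<in> Mid n. dimT n Q = k} = (\<lambda>a. Zb a (n - k)) ` {a. a + (n - k) \<le> n \<and> k \<le> n}"
  proof
    show "{Q \<in> Mid n. dimT n Q = k} \<subseteq> (\<lambda>a. Zb a (n - k)) ` {a. a + (n - k) \<le> n \<and> k \<le> n}"
    proof
      fix Q assume "Q \<in> {Q \<in> Mid n. dimT n Q = k}"
      then obtain a z where az: "a + z \<le> n" "Q = Zb a z" "dimT n Q = k" by (auto simp: Mid_def)
      then have kz: "k = n - z" using dim_mid by simp
      have z: "z = n - k" "k \<le> n" using kz az(1) by arith+
      have "a \<in> {a. a + (n - k) \<le> n \<and> k \<le> n}" using z az(1) by simp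
      moreover have "Q = Zb a (n - k)" using z az(2) by simp
      ultimately show "Q \<in> (\<lambda>a. Zb a (n - k)) ` {a. a + (n - k) \<le> n \<and> k \<le> n}" by (rule rev_image_eqI)
    qed
    show "(\<lambda>a. Zb a (n - k)) ` {a. a + (n - k) \<le> n \<and> k \<le> n} \<subseteq> {Q \<in> Mid n. dimT n Q = k}"
    proof
      fix Q assume "Q \<in> (\<lambda>a. Zb a (n - k)) ` {a. a + (n - k) \<le> n \<and> k \<le> n}"
      then obtain a where a: "a + (n - k) \<le> n" "k \<le> n" "Q = Zb a (n - k)" by auto
      then have "dimT n Q = k" using dim_mid[OF a(1)] by simp
      moreover have "Q \<in> Mid n" unfolding Mid_def using a(1,3) by blast
      ultimately show "Q \<in> {Q \<in> Mid n. dimT n Q = k}" by simp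
    qed
  qed
  show ?thesis
  proof (cases "k \<le> n")
    case False
    then show ?thesis unfolding M by simp
  next
    case True
    show ?thesis
    proof (cases "k = n")
      case True
      have s: "{a. a + (n - k) \<le> n \<and> k \<le> n} = {..n}" using True by auto
      have "(\<lambda>a. Zb a (n - k)) ` {..n} = (\<lambda>a. {}) ` {..n}" using True Zb0 by simp
      also have "\<dots> = {{}}" by auto
      finally have "(\<lambda>a. Zb a (n - k)) ` {a. a + (n - k) \<le> n \<and> k \<le> n} = {{}}" unfolding s .
      then show ?thesis unfolding M using True by simp
    next
      case False
      have s: "{a. a + (n - k) \<le> n \<and> k \<le> n} = {..k}" using \<open>k \<le> n\<close> by auto
      have z1: "n - k \<ge> 1" using False \<open>k \<le> n\<close> by simp
      have "inj_on (\<lambda>a. Zb a (n - k)) {..k}"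
        by (rule inj_onI) (rule Zb_inj[OF _ z1])
      then show ?thesis unfolding M s using False \<open>k \<le> n\<close> by (simp add: card_image)
    qed
  qed
qed

lemma Par_D: "(u, p, q, w) \<in> Par n \<Longrightarrow> 1 \<le> p \<and> 1 \<le> q \<and> u + p + q + w \<le> n"
  by (simp add: Par_def)

lemma dim_OQ:
  assumes t: "t \<in> Par n" and Q: "Q' \<in> Real (nr n t)"
  shows "dimT n (OQ n t Q') = dimT (nr n t) Q' + bt t"
proof -
  obtain u p q w where tt: "t = (u, p, q, w)" by (cases t) auto
  then have pq: "1 \<le> p" "1 \<le> q" "u + p + q + w \<le> n" using t Par_D by auto
  have nn: "n = u + p + (nr n t) + q + w" using tt pq by simp
  show ?thesis using dim_outer[OF Q pq(1,2) nn] tt by simp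
qed

lemma OQ_inj:
  assumes t1: "t1 \<in> Par n" and t2: "t2 \<in> Par n" and Q1: "Q1 \<in> Real (nr n t1)" and Q2: "Q2 \<in> Real (nr n t2)"
    and e: "OQ n t1 Q1 = OQ n t2 Q2"
  shows "t1 = t2 \<and> Q1 = Q2"
proof -
  obtain u1 p1 q1 w1 where tt1: "t1 = (u1, p1, q1, w1)" by (cases t1) auto
  obtain u2 p2 q2 w2 where tt2: "t2 = (u2, p2, q2, w2)" by (cases t2) auto
  have a1: "1 \<le> p1" "1 \<le> q1" "u1 + p1 + q1 + w1 \<le> n" using t1 tt1 Par_D by auto
  have a2: "1 \<le> p2" "1 \<le> q2" "u2 + p2 + q2 + w2 \<le> n" using t2 tt2 Par_D by auto
  have "u1 = u2 \<and> p1 = p2 \<and> q1 = q2 \<and> n - (u1 + p1 + q1 + w1) = n - (u2 + p2 + q2 + w2) \<and> Q1 = Q2"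
  proof (rule outer_inj)
    show "outerQ u1 p1 q1 (n - (u1 + p1 + q1 + w1)) Q1 = outerQ u2 p2 q2 (n - (u2 + p2 + q2 + w2)) Q2"
      using e tt1 tt2 by simp
    show "Q1 \<subseteq> wpairs (n - (u1 + p1 + q1 + w1))" using Real_sub[OF Q1] tt1 by simp
    show "Q2 \<subseteq> wpairs (n - (u2 + p2 + q2 + w2))" using Real_sub[OF Q2] tt2 by simp
  qed (use a1 a2 in auto)
  then have r: "u1 = u2" "p1 = p2" "q1 = q2" "n - (u1 + p1 + q1 + w1) = n - (u2 + p2 + q2 + w2)" "Q1 = Q2"
    by blast+
  have "w1 = w2" using r(1-4) a1(3) a2(3) by arith
  then show ?thesis using tt1 tt2 r by simp
qed

lemma finite_Real: "finite (Real n)"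
proof -
  have "Real n \<subseteq> Pow (wpairs n)" using Real_sub by blast
  then show ?thesis using finite_wpairs by (meson finite_Pow_iff finite_subset)
qed

lemma finite_Par: "finite (Par n)"
proof -
  have "Par n \<subseteq> {..n} \<times> {..n} \<times> {..n} \<times> {..n}" by (auto simp: Par_def)
  then show ?thesis by (rule finite_subset) simp
qed

lemma count_shift: "card {Q' \<in> Real m. dimT m Q' + b = k} = (if b \<le> k then h m (k - b) else 0)"
proof (cases "b \<le> k")
  case True
  then have "{Q' \<in> Real m. dimT m Q' + b = k} = {Q' \<in> Real m. dimT m Q' = k - b}" by auto
  then show ?thesis using True h_Real by simp
next
  case False
  then have "{Q' \<in> Real m. dimT m Q' + b = k} = {}" by auto
  then show ?thesis using False by simp
qed

lemma h_rec: "h n k = (if k = n then 1 else if k < n then k + 1 else 0) +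
   (\<Sum>t\<in>Par n. if bt t \<le> k then h (nr n t) (k - bt t) else 0)"
proof -
  define A where "A = {Q \<in> Mid n. dimT n Q = k}"
  define B where "B t = OQ n t ` {Q' \<in> Real (nr n t). dimT (nr n t) Q' + bt t = k}" for t
  have MR: "Mid n \<subseteq> Real n" using Real_dec by blast
  have OR: "OQ n t ` Real (nr n t) \<subseteq> Real n" if "t \<in> Par n" for t using Real_dec that by blast
  have eq: "{Q \<in> Real n. dimT n Q = k} = A \<union> (\<Union>t\<in>Par n. B t)"
  proof
    show "{Q \<in> Real n. dimT n Q = k} \<subseteq> A \<union> (\<Union>t\<in>Par n. B t)"
    proof
      fix Q assume Q: "Q \<in> {Q \<in> Real n. dimT n Q = k}"
      then have "Q \<in> Mid n \<or> (\<exists>t\<in>Par n. Q \<in> OQ n t ` Real (nr n t))" using Real_dec by blast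
      then show "Q \<in> A \<union> (\<Union>t\<in>Par n. B t)"
      proof
        assume "Q \<in> Mid n" then show ?thesis using Q by (simp add: A_def)
      next
        assume "\<exists>t\<in>Par n. Q \<in> OQ n t ` Real (nr n t)"
        then obtain t Q' where t: "t \<in> Par n" "Q' \<in> Real (nr n t)" "Q = OQ n t Q'" by blast
        then have "dimT (nr n t) Q' + bt t = k" using Q dim_OQ by simp
        then have "Q \<in> B t" using t unfolding B_def by blast
        then show ?thesis using t(1) by blast
      qed
    qed
    show "A \<union> (\<Union>t\<in>Par n. B t) \<subseteq> {Q \<in> Real n. dimT n Q = k}"
    proof
      fix Q assume "Q \<in> A \<union> (\<Union>t\<in>Par n. B t)"
      then consider "Q \<in> A" | t where "t \<in> Par n" "Q \<in> B t" by blast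
      then show "Q \<in> {Q \<in> Real n. dimT n Q = k}"
      proof cases
        case 1 then show ?thesis using MR by (auto simp: A_def)
      next
        case 2
        then obtain Q' where "Q' \<in> Real (nr n t)" "dimT (nr n t) Q' + bt t = k" "Q = OQ n t Q'"
          unfolding B_def by blast
        then show ?thesis using dim_OQ[OF 2(1)] OR[OF 2(1)] by auto
      qed
    qed
  qed
  have "A \<subseteq> Real n" using MR unfolding A_def by blast
  then have finA: "finite A" using finite_Real by (rule finite_subset)
  have finB: "finite (B t)" for t unfolding B_def using finite_Real by simp
  have disjAB: "A \<inter> (\<Union>t\<in>Par n. B t) = {}"
  proof -
    have "Q \<notin> B t" if QA: "Q \<in> A" and tP: "t \<in> Par n" for Q t
    proof
      assume "Q \<in> B t"
      then obtain Q' where Q': "Q = OQ n t Q'" unfolding B_def by blast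
      obtain a z where az: "Q = Zb a z" using QA by (auto simp: A_def Mid_def)
      obtain u p q w where tt: "t = (u, p, q, w)" by (cases t) auto
      then have "1 \<le> p" "1 \<le> q" using tP Par_D by auto
      moreover have "Q = outerQ u p q (n - (u + p + q + w)) Q'" using Q' tt by simp
      ultimately show False using outer_not_mid az by metis
    qed
    then show ?thesis by blast
  qed
  have disjB: "B t1 \<inter> B t2 = {}" if "t1 \<in> Par n" "t2 \<in> Par n" "t1 \<noteq> t2" for t1 t2
  proof -
    have "Q \<notin> B t2" if q1: "Q \<in> B t1" for Q
    proof
      assume "Q \<in> B t2"
      then obtain Q2 where "Q2 \<in> Real (nr n t2)" "Q = OQ n t2 Q2" unfolding B_def by blast
      moreover obtain Q1 where "Q1 \<in> Real (nr n t1)" "Q = OQ n t1 Q1" using q1 unfolding B_def by blast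
      ultimately show False using OQ_inj \<open>t1 \<in> Par n\<close> \<open>t2 \<in> Par n\<close> \<open>t1 \<noteq> t2\<close> by metis
    qed
    then show ?thesis by blast
  qed
  have cB: "card (B t) = (if bt t \<le> k then h (nr n t) (k - bt t) else 0)" if t: "t \<in> Par n" for t
  proof -
    have "inj_on (OQ n t) {Q' \<in> Real (nr n t). dimT (nr n t) Q' + bt t = k}"
      by (rule inj_onI) (use OQ_inj[OF t t] in blast)
    then have "card (B t) = card {Q' \<in> Real (nr n t). dimT (nr n t) Q' + bt t = k}"
      unfolding B_def by (rule card_image)
    then show ?thesis using count_shift by simp
  qed
  have "h n k = card (A \<union> (\<Union>t\<in>Par n. B t))" unfolding h_Real eq ..
  also have "\<dots> = card A + card (\<Union>t\<in>Par n. B t)"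
    using finA finB finite_Par disjAB by (intro card_Un_disjoint) auto
  also have "card (\<Union>t\<in>Par n. B t) = (\<Sum>t\<in>Par n. card (B t))"
    using finite_Par finB disjB by (intro card_UN_disjoint) auto
  also have "\<dots> = (\<Sum>t\<in>Par n. if bt t \<le> k then h (nr n t) (k - bt t) else 0)"
    by (rule sum.cong) (simp_all add: cB)
  finally show ?thesis unfolding A_def Mid_count .
qed

fun sz :: "nat \<times> nat \<times> nat \<times> nat \<Rightarrow> nat" where
  "sz (u, p, q, w) = u + p + q + w"

definition eeN :: "nat \<Rightarrow> nat \<Rightarrow> nat" where
  "eeN a b = (if 1 \<le> b \<and> b < a then b * (a - b) else 0)"

lemma card_fiber:
  assumes an: "a \<le> n"
  shows "card {t \<in> Par n. sz t = a \<and> bt t = b} = eeN a b"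
proof (cases "1 \<le> b \<and> b < a")
  case True
  define f where "f = (\<lambda>(u, p). (u, p, a - b + 1 - p, b - 1 - (u::nat)))"
  have eq: "{t \<in> Par n. sz t = a \<and> bt t = b} = f ` ({..<b} \<times> {1..a - b})"
  proof
    show "{t \<in> Par n. sz t = a \<and> bt t = b} \<subseteq> f ` ({..<b} \<times> {1..a - b})"
    proof
      fix t assume t: "t \<in> {t \<in> Par n. sz t = a \<and> bt t = b}"
      obtain u p q w where tt: "t = (u, p, q, w)" by (cases t) auto
      then have c: "1 \<le> p" "1 \<le> q" "u + p + q + w = a" "u + w + 1 = b"
        using t by (auto simp: Par_def)
      then have "(u, p) \<in> {..<b} \<times> {1..a - b}" by auto
      moreover have "t = f (u, p)" using c tt unfolding f_def by auto
      ultimately show "t \<in> f ` ({..<b} \<times> {1..a - b})" by blast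
    qed
    show "f ` ({..<b} \<times> {1..a - b}) \<subseteq> {t \<in> Par n. sz t = a \<and> bt t = b}"
    proof
      fix t assume "t \<in> f ` ({..<b} \<times> {1..a - b})"
      then obtain u p where up: "u < b" "1 \<le> p" "p \<le> a - b" "t = f (u, p)" by auto
      then show "t \<in> {t \<in> Par n. sz t = a \<and> bt t = b}"
        using True an unfolding f_def by (auto simp: Par_def)
    qed
  qed
  have "inj_on f ({..<b} \<times> {1..a - b})" unfolding f_def by (auto simp: inj_on_def)
  then have "card (f ` ({..<b} \<times> {1..a - b})) = b * (a - b)" by (simp add: card_image card_cartesian_product)
  then show ?thesis unfolding eq eeN_def using True by simp
next
  case False
  have "{t \<in> Par n. sz t = a \<and> bt t = b} = {}"
  proof -
    have "False" if t: "t \<in> Par n" "sz t = a" "bt t = b" for t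
    proof -
      obtain u p q w where tt: "t = (u, p, q, w)" by (cases t) auto
      then have "1 \<le> p" "1 \<le> q" "u + p + q + w = a" "u + w + 1 = b" using t by (auto simp: Par_def)
      then show False using False by arith
    qed
    then show ?thesis by blast
  qed
  then have "card {t \<in> Par n. sz t = a \<and> bt t = b} = 0" by (simp only: card.empty)
  moreover have "eeN a b = 0" using False by (simp add: eeN_def)
  ultimately show ?thesis by simp
qed

lemma sum_regroup:
  "(\<Sum>t\<in>Par n. if bt t \<le> k then h (nr n t) (k - bt t) else 0) =
   (\<Sum>i\<le>n. \<Sum>j\<le>k. eeN i j * h (n - i) (k - j))"
proof -
  define G where "G = (\<lambda>(a, b). if b \<le> k then h (n - a) (k - b) else 0)"
  define phi where "phi t = (sz t, bt t)" for t
  have L: "(if bt t \<le> k then h (nr n t) (k - bt t) else 0) = G (phi t)" if "t \<in> Par n" for t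
  proof -
    obtain u p q w where "t = (u, p, q, w)" by (cases t) auto
    then show ?thesis unfolding G_def phi_def by simp
  qed
  have sub: "phi ` Par n \<subseteq> {..n} \<times> {..n}" unfolding phi_def by (auto simp: Par_def)
  have "(\<Sum>t\<in>Par n. if bt t \<le> k then h (nr n t) (k - bt t) else 0) = (\<Sum>t\<in>Par n. G (phi t))"
    by (rule sum.cong) (simp_all add: L)
  also have "\<dots> = (\<Sum>y\<in>{..n} \<times> {..n}. \<Sum>t\<in>{t \<in> Par n. phi t = y}. G (phi t))"
    by (rule sum.group[symmetric]) (use finite_Par sub in auto)
  also have "\<dots> = (\<Sum>y\<in>{..n} \<times> {..n}. eeN (fst y) (snd y) * G y)"
  proof (rule sum.cong)
    fix y assume y: "y \<in> {..n} \<times> {..n}"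
    have "(\<Sum>t\<in>{t \<in> Par n. phi t = y}. G (phi t)) = (\<Sum>t\<in>{t \<in> Par n. phi t = y}. G y)"
      by (rule sum.cong) auto
    also have "\<dots> = card {t \<in> Par n. phi t = y} * G y" by simp
    also have "card {t \<in> Par n. phi t = y} = eeN (fst y) (snd y)"
    proof -
      have "{t \<in> Par n. phi t = y} = {t \<in> Par n. sz t = fst y \<and> bt t = snd y}"
        unfolding phi_def by (cases y) auto
      moreover have "fst y \<le> n" using y by auto
      ultimately show ?thesis using card_fiber by simp
    qed
    finally show "(\<Sum>t\<in>{t \<in> Par n. phi t = y}. G (phi t)) = eeN (fst y) (snd y) * G y" .
  qed simp
  also have "\<dots> = (\<Sum>i\<le>n. \<Sum>j\<le>n. eeN i j * G (i, j))"
    by (simp add: sum.cartesian_product case_prod_beta')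
  also have "\<dots> = (\<Sum>i\<le>n. \<Sum>j\<le>k. eeN i j * h (n - i) (k - j))"
  proof (rule sum.cong)
    fix i assume i: "i \<in> {..n}"
    have "(\<Sum>j\<le>n. eeN i j * G (i, j)) = (\<Sum>j\<in>{..min n k}. eeN i j * G (i, j))"
      by (rule sum.mono_neutral_cong_right) (auto simp: G_def)
    also have "\<dots> = (\<Sum>j\<le>k. eeN i j * h (n - i) (k - j))"
      by (rule sum.mono_neutral_cong_left) (use i in \<open>auto simp: G_def eeN_def\<close>)
    finally show "(\<Sum>j\<le>n. eeN i j * G (i, j)) = (\<Sum>j\<le>k. eeN i j * h (n - i) (k - j))" .
  qed simp
  finally show ?thesis .
qed

lemma h_rec2: "h n k = (if k = n then 1 else if k < n then k + 1 else 0) +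
   (\<Sum>i\<le>n. \<Sum>j\<le>k. eeN i j * h (n - i) (k - j))"
  by (subst sum_regroup[symmetric]) (rule h_rec)

unbundle fps_syntax


lemma cS: "(X * (1 - S)) $ n = X $ n - (if n = 0 then 0 else X $ (n - 1))"
  for X :: "rat fps fps"
  by (simp add: S_def algebra_simps)

lemma cS2: "(X * (1 - S)) $ n $ k = X $ n $ k - (if n = 0 then 0 else X $ (n - 1) $ k)"
  for X :: "rat fps fps"
  by (simp add: cS)

lemma cST: "(X * (1 - S * T)) $ n $ k =
   X $ n $ k - (if n = 0 \<or> k = 0 then 0 else X $ (n - 1) $ (k - 1))"
  for X :: "rat fps fps"
proof -
  have "X * (1 - S * T) = X - fps_X * (X * T)" by (simp add: S_def algebra_simps)
  then show ?thesis by (simp add: T_def)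
qed

lemma fps_mult_nth2: "(X * Y) $ n $ k = (\<Sum>i\<le>n. \<Sum>j\<le>k. X $ i $ j * Y $ (n - i) $ (k - j))"
  for X Y :: "rat fps fps"
  by (simp add: fps_mult_nth fps_sum_nth atLeast0AtMost)

definition mm :: "nat \<Rightarrow> nat \<Rightarrow> rat" where
  "mm n k = (if k = n then 1 else if k < n then of_nat k + 1 else 0)"
definition ee :: "nat \<Rightarrow> nat \<Rightarrow> rat" where
  "ee a b = (if 1 \<le> b \<and> b < a then of_nat (b * (a - b)) else 0)"
definition Ms :: "rat fps fps" where "Ms = Abs_fps (\<lambda>n. Abs_fps (\<lambda>k. mm n k))"
definition Es :: "rat fps fps" where "Es = Abs_fps (\<lambda>n. Abs_fps (\<lambda>k. ee n k))"

lemma E1: "Es * (1 - S * T) = Abs_fps (\<lambda>n. Abs_fps (\<lambda>k. if 1 \<le> k \<and> k < n then of_nat (n - k) else 0))"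
  apply (rule fps_ext, rule fps_ext)
  apply (simp add: cST Es_def ee_def)
  apply (auto simp: of_nat_diff algebra_simps)
  done

lemma E2: "Es * (1 - S * T)^2 = Abs_fps (\<lambda>n. Abs_fps (\<lambda>k. if k = 1 \<and> k < n then of_nat (n - k) else 0))"
proof -
  have "Es * (1 - S * T)^2 = (Es * (1 - S * T)) * (1 - S * T)" by (simp add: power2_eq_square algebra_simps)
  also have "\<dots> = Abs_fps (\<lambda>n. Abs_fps (\<lambda>k. if k = 1 \<and> k < n then of_nat (n - k) else 0))"
    unfolding E1
    apply (rule fps_ext, rule fps_ext)
    apply (simp add: cST)
    apply (auto simp: of_nat_diff algebra_simps)
    done
  finally show ?thesis .
qed

lemma E3: "Es * (1 - S * T)^2 * (1 - S) = Abs_fps (\<lambda>n. Abs_fps (\<lambda>k. if k = 1 \<and> k < n then 1 else 0))"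
  unfolding E2
  apply (rule fps_ext, rule fps_ext)
  apply (simp add: cS2)
  apply (auto simp: of_nat_diff algebra_simps)
  done

lemma E4: "Es * (1 - S * T)^2 * (1 - S)^2 = S^2 * T"
proof -
  have "Es * (1 - S * T)^2 * (1 - S)^2 = (Es * (1 - S * T)^2 * (1 - S)) * (1 - S)" by (simp add: power2_eq_square algebra_simps)
  also have "\<dots> = S^2 * T"
    unfolding E3
    apply (rule fps_ext, rule fps_ext)
    apply (simp add: cS2 S_def T_def power2_eq_square)
    apply (auto simp: of_nat_diff algebra_simps)
    done
  finally show ?thesis .
qed

lemma M1: "Ms * (1 - S * T) = Abs_fps (\<lambda>n. Abs_fps (\<lambda>k. if (n = 0 \<and> k = 0) \<or> k < n then 1 else 0))"
  apply (rule fps_ext, rule fps_ext)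
  apply (simp add: cST Ms_def mm_def)
  apply (auto simp: of_nat_diff algebra_simps)
  done

lemma M2: "Ms * (1 - S * T)^2 = Abs_fps (\<lambda>n. Abs_fps (\<lambda>k. (if k = 0 then 1 else 0) - (if n = 1 \<and> k = 1 then 1 else 0)))"
proof -
  have "Ms * (1 - S * T)^2 = (Ms * (1 - S * T)) * (1 - S * T)" by (simp add: power2_eq_square algebra_simps)
  also have "\<dots> = Abs_fps (\<lambda>n. Abs_fps (\<lambda>k. (if k = 0 then 1 else 0) - (if n = 1 \<and> k = 1 then 1 else 0)))"
    unfolding M1
    apply (rule fps_ext, rule fps_ext)
    apply (simp add: cST)
    apply (auto simp: of_nat_diff algebra_simps)
    done
  finally show ?thesis .
qed

lemma M3: "Ms * (1 - S * T)^2 * (1 - S) = 1 - S * T + S^2 * T"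
  unfolding M2
  apply (rule fps_ext, rule fps_ext)
  apply (simp add: cS2 S_def T_def power2_eq_square)
  apply (auto simp: algebra_simps)
  done

lemma fps_final:
  assumes rec: "\<And>n k. of_nat (h n k) = mm n k + (\<Sum>i\<le>n. \<Sum>j\<le>k. ee i j * of_nat (h (n - i) (k - j)))"
  shows "H = (1 - S) * (1 - S * T + S^2 * T) *
    inverse (1 - 2*S + S^2 - 2*S*T + 3*S^2*T - 2*S^3*T + S^2*T^2 - 2*S^3*T^2 + S^4*T^2)"
proof -
  define D where "D = (1 - 2*S + S^2 - 2*S*T + 3*S^2*T - 2*S^3*T + S^2*T^2 - 2*S^3*T^2 + S^4*T^2)"
  have HE: "H = Ms + Es * H"
    apply (rule fps_ext, rule fps_ext)
    apply (simp add: fps_mult_nth2 H_def Ms_def Es_def)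
    apply (rule rec)
    done
  have D': "D = (1 - S * T)^2 * (1 - S)^2 - S^2 * T"
    unfolding D_def by (simp add: power2_eq_square power3_eq_cube power4_eq_xxxx algebra_simps)
  have "H * D = Ms * ((1 - S * T)^2 * (1 - S)^2) + (Es * (1 - S * T)^2 * (1 - S)^2) * H - S^2 * T * H"
  proof -
    have "H * D = H * ((1 - S * T)^2 * (1 - S)^2) - S^2 * T * H" unfolding D' by (simp add: algebra_simps)
    also have "H * ((1 - S * T)^2 * (1 - S)^2) = (Ms + Es * H) * ((1 - S * T)^2 * (1 - S)^2)"
      using HE by simp
    finally show ?thesis by (simp add: algebra_simps)
  qed
  also have "\<dots> = (Ms * (1 - S * T)^2 * (1 - S)) * (1 - S)"
    unfolding E4 by (simp add: algebra_simps power2_eq_square)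
  also have "\<dots> = (1 - S) * (1 - S * T + S^2 * T)" unfolding M3 by (simp add: algebra_simps)
  finally have HD: "H * D = (1 - S) * (1 - S * T + S^2 * T)" .
  have D0: "D $ 0 = 1" unfolding D_def by (simp add: S_def T_def)
  have "D * inverse D = 1"
  proof -
    have "inverse D = fps_right_inverse D (inverse (D $ 0))" by (rule fps_inverse_def)
    also have "inverse (D $ 0) = 1" using D0 by simp
    finally show ?thesis using fps_right_inverse[of D 1] D0 by simp
  qed
  then have "H = H * D * inverse D" by (simp add: mult.assoc)
  then show ?thesis unfolding HD by (simp add: D_def)
qed


lemma rec_rat: "of_nat (h n k) = mm n k + (\<Sum>i\<le>n. \<Sum>j\<le>k. ee i j * of_nat (h (n - i) (k - j)))"
proof -
  have "(of_nat (h n k) :: rat) = of_nat ((if k = n then 1 else if k < n then k + 1 else 0) +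
     (\<Sum>i\<le>n. \<Sum>j\<le>k. eeN i j * h (n - i) (k - j)))"
    by (subst h_rec2) (rule refl)
  also have "\<dots> = mm n k + (\<Sum>i\<le>n. \<Sum>j\<le>k. ee i j * of_nat (h (n - i) (k - j)))"
  proof -
    have e: "\<And>i j. (of_nat (eeN i j) :: rat) = ee i j" by (simp add: eeN_def ee_def)
    show ?thesis by (simp add: mm_def of_nat_sum e)
  qed
  finally show ?thesis .
qed

theorem theorem1p10:
  "H = (1 - S) * (1 - S * T + S^2 * T) *
    inverse (1 - 2*S + S^2 - 2*S*T + 3*S^2*T - 2*S^3*T + S^2*T^2 - 2*S^3*T^2 + S^4*T^2)"
  by (rule fps_final) (rule rec_rat)

end
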